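(* Let $r^\star_0\in(r^\star_{3M},\pi/2)$. There exists $C=C(M,k,r^\star_0)>0$ such that for all sufficiently large $\ell$, $$\int_{r^\star_{3M}}^{r^\star_0}\big((R_{\mathrm{QM},\ell}')^2+\ell(\ell+1)R_{\mathrm{QM},\ell}^2\big)\,dr^\star\le Ce^{-C^{-1}\ell}\int_{r^\star_{3M}}^{\pi/2}\big((R_{\mathrm{QM},\ell}')^2+\ell(\ell+1)R_{\mathrm{QM},\ell}^2\big)\,dr^\star.$$
   Context: Fix $M>0$, $k>0$; $\Delta(r)=r^2+k^2r^4-2Mr$, $w:=\Delta/r^4$, viewed as a function of $r^\star$ defined by $dr^\star/dr=r^2/\Delta$, $r^\star(r=+\infty)=\pi/2$; $r^\star_{3M}=r^\star(r=3M)$; prime is $d/dr^\star$. For $\ell\ge2$, $\omega_\ell^2$ is the lowest eigenvalue and $R_{\mathrm{QM},\ell}$ a corresponding real eigenfunction (equivalently a minimiser of the quotient below) of the problem $\omega^2R=-R''+w(\ell(\ell+1)-\frac{6M}{r})R$ on $[r^\star_{3M},\pi/2]$, $R(r^\star_{3M})=0$, $(-2\omega^2R+\frac{\ell(\ell+1)(\ell(\ell+1)-2)}{6M}R'+k^2\ell(\ell+1)R)(\pi/2)=0$, where $$\omega_\ell^2=\inf_{R\in H^1_0((r^\star_{3M},\pi/2])\setminus\{0\}}\frac{\int_{r^\star_{3M}}^{\pi/2}\big((R')^2+w(\ell(\ell+1)-\frac{6M}{r})R^2\big)dr^\star+\frac{6Mk^2}{\ell(\ell+1)-2}R(\frac\pi2)^2}{\int_{r^\star_{3M}}^{\pi/2}R^2\,dr^\star+\frac{12M}{\ell(\ell+1)(\ell(\ell+1)-2)}R(\frac\pi2)^2},$$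 $H^1_0((r^\star_{3M},\pi/2])$ being the $H^1$-closure of smooth functions compactly supported in $(r^\star_{3M},\pi/2]$. *)

theory Defs
  imports "HOL-Analysis.Analysis"
begin

definition Delta :: "real \<Rightarrow> real \<Rightarrow> real \<Rightarrow> real" where
  "Delta M k r = r^2 + k^2 * r^4 - 2 * M * r"

text \<open>Tortoise coordinate r*(r) with dr*/dr = r^2/Delta and r*(+infinity) = pi/2,
  i.e. r*(r) = pi/2 - integral from r to infinity of s^2/Delta(s) ds (used for r >= 3M).\<close>
definition rstar :: "real \<Rightarrow> real \<Rightarrow> real \<Rightarrow> real" where
  "rstar M k r = pi / 2 - integral {r..} (\<lambda>s. s^2 / Delta M k s)"

definition r_of :: "real \<Rightarrow> real \<Rightarrow> real \<Rightarrow> real" where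
  "r_of M k x = (THE r. 3 * M \<le> r \<and> rstar M k r = x)"

text \<open>w = Delta / r^4 as a function of r*; at r* = pi/2 (r = infinity) its limit k^2.\<close>
definition wstar :: "real \<Rightarrow> real \<Rightarrow> real \<Rightarrow> real" where
  "wstar M k x = (if x < pi / 2 then Delta M k (r_of M k x) / (r_of M k x)^4 else k^2)"

text \<open>6M/r as a function of r*; at r* = pi/2 (r = infinity) its limit 0.\<close>
definition sixM_over_r :: "real \<Rightarrow> real \<Rightarrow> real \<Rightarrow> real" where
  "sixM_over_r M k x = (if x < pi / 2 then 6 * M / r_of M k x else 0)"

definition Vpot :: "real \<Rightarrow> real \<Rightarrow> nat \<Rightarrow> real \<Rightarrow> real" where
  "Vpot M k l x = wstar M k x * (real (l * (l + 1)) - sixM_over_r M k x)"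

definition QM_num :: "real \<Rightarrow> real \<Rightarrow> nat \<Rightarrow> (real \<Rightarrow> real) \<Rightarrow> real" where
  "QM_num M k l R =
     integral {rstar M k (3 * M) .. pi / 2} (\<lambda>x. (deriv R x)^2 + Vpot M k l x * (R x)^2)
     + 6 * M * k^2 / (real (l * (l + 1)) - 2) * (R (pi / 2))^2"

definition QM_den :: "real \<Rightarrow> real \<Rightarrow> nat \<Rightarrow> (real \<Rightarrow> real) \<Rightarrow> real" where
  "QM_den M k l R =
     integral {rstar M k (3 * M) .. pi / 2} (\<lambda>x. (R x)^2)
     + 12 * M / (real (l * (l + 1)) * (real (l * (l + 1)) - 2)) * (R (pi / 2))^2"

text \<open>Admissible trial functions: C^1 on [r*_3M, pi/2], vanishing at r*_3M, nonzero there.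
  (This dense class has the same infimum as H^1_0((r*_3M, pi/2]); minimisers over H^1_0
  are smooth, hence the minimisers coincide.)\<close>
definition QM_admissible :: "real \<Rightarrow> real \<Rightarrow> (real \<Rightarrow> real) \<Rightarrow> bool" where
  "QM_admissible M k R \<longleftrightarrow>
     R C1_differentiable_on {rstar M k (3 * M) .. pi / 2}
     \<and> R (rstar M k (3 * M)) = 0
     \<and> (\<exists>x\<in>{rstar M k (3 * M) .. pi / 2}. R x \<noteq> 0)"

text \<open>R_QM,l: a real minimiser of the Rayleigh quotient (lowest eigenfunction).\<close>
definition is_R_QM :: "real \<Rightarrow> real \<Rightarrow> nat \<Rightarrow> (real \<Rightarrow> real) \<Rightarrow> bool" where
  "is_R_QM M k l R \<longleftrightarrow>
     QM_admissible M k R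
     \<and> (\<forall>S. QM_admissible M k S \<longrightarrow>
            QM_num M k l R / QM_den M k l R \<le> QM_num M k l S / QM_den M k l S)"

end

theory Submission
  imports Defs
begin


lemma leb_atLeast: "{r::real..} \<in> sets lebesgue"
  by (metis borel_closed closed_atLeast sets_completionI_sets sets_lborel)

lemma Delta_pos:
  assumes "M > 0" "k > 0" "s \<ge> 3*M"
  shows "Delta M k s \<ge> k^2 * s^4" "Delta M k s > 0" "Delta M k s \<le> s^2 + k^2 * s^4"
proof -
  have "s * (s - 2*M) \<ge> 0" using assms by auto
  then show "Delta M k s \<ge> k^2 * s^4" unfolding Delta_def by (simp add: algebra_simps power2_eq_square)
  moreover have "k^2 * s^4 > 0" using assms by simp
  ultimately show "Delta M k s > 0" by linarith
  show "Delta M k s \<le> s^2 + k^2 * s^4" unfolding Delta_def using assms by simp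
qed

definition gfun :: "real \<Rightarrow> real \<Rightarrow> real \<Rightarrow> real" where
  "gfun M k s = s^2 / Delta M k s"

lemma gfun_bounds:
  assumes "M > 0" "k > 0" "s \<ge> 3*M"
  shows "gfun M k s \<le> (1/k^2) * s powr (-2)" "gfun M k s \<ge> 1 / (1 + k^2 * s^2)" "gfun M k s > 0"
proof -
  have s: "s > 0" using assms by simp
  have D1: "Delta M k s \<ge> k^2 * s^4" and D2: "Delta M k s > 0" and D3: "Delta M k s \<le> s^2 + k^2 * s^4"
    using Delta_pos[OF assms] by auto
  have "s powr (-2) = 1 / s^2" using s by (simp add: powr_minus powr_realpow divide_inverse)
  moreover have "s^2 / (k^2 * s^4) = 1 / (k^2 * s^2)" using s assms by (simp add: field_simps power2_eq_square power4_eq_xxxx)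
  ultimately have "(1/k^2) * s powr (-2) = s^2 / (k^2 * s^4)" by simp
  moreover have "s^2 / Delta M k s \<le> s^2 / (k^2 * s^4)"
    using D1 D2 s assms by (intro divide_left_mono) auto
  ultimately show "gfun M k s \<le> (1/k^2) * s powr (-2)" unfolding gfun_def by simp
  have "s^2 / Delta M k s \<ge> s^2 / (s^2 + k^2 * s^4)"
    using D3 D2 s by (intro divide_left_mono) auto
  moreover have "s^2 / (s^2 + k^2 * s^4) = 1 / (1 + k^2 * s^2)"
  proof -
    have "s^2 + k^2 * s^4 = s^2 * (1 + k^2 * s^2)" by (simp add: algebra_simps power4_eq_xxxx power2_eq_square)
    thus ?thesis using s by simp
  qed
  ultimately show "gfun M k s \<ge> 1 / (1 + k^2 * s^2)" unfolding gfun_def by simp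
  show "gfun M k s > 0" unfolding gfun_def using D2 s by simp
qed

lemma gfun_cont:
  assumes "M > 0" "k > 0" "r \<ge> 3*M"
  shows "continuous_on {r..} (gfun M k)"
proof -
  have nz: "\<forall>s\<in>{r..}. Delta M k s \<noteq> 0"
  proof
    fix s assume "s \<in> {r..}"
    hence "s \<ge> 3*M" using assms by auto
    thus "Delta M k s \<noteq> 0" using Delta_pos(2)[OF assms(1,2)] by (metis less_irrefl)
  qed
  have "continuous_on {r..} (\<lambda>s. s^2 / Delta M k s)"
    unfolding Delta_def
    apply (intro continuous_intros)
    using nz unfolding Delta_def by auto
  then show ?thesis unfolding gfun_def[abs_def] .
qed

lemma gfun_int:
  assumes "M > 0" "k > 0" "r \<ge> 3*M"
  shows "gfun M k integrable_on {r..}"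
    "integral {r..} (gfun M k) \<le> 1 / (k^2 * r)"
    "integral {r..} (gfun M k) \<ge> 0"
proof -
  have r: "r > 0" using assms by simp
  have hi: "((\<lambda>x. x powr (-2)) has_integral -(r powr (-2+1)) / (-2+1)) {r..}"
    using has_integral_powr_to_inf[of "-2" r] r by simp
  have e1: "-(r powr (-2+1)) / (-2+1) = 1/r" using r by (simp add: powr_minus divide_inverse)
  have hi2: "((\<lambda>x. (1/k^2) * x powr (-2)) has_integral (1/k^2) * (1/r)) {r..}"
    using has_integral_mult_right[OF hi, of "1/k^2"] unfolding e1 .
  have bd: "abs (gfun M k x) \<le> (1/k^2) * x powr (-2)" if "x \<in> {r..}" for x
  proof -
    have x: "x \<ge> 3*M" using that assms by simp
    show ?thesis using gfun_bounds(1,3)[OF assms(1,2) x] by simp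
  qed
  have ms: "gfun M k \<in> borel_measurable (lebesgue_on {r..})"
    using continuous_imp_measurable_on_sets_lebesgue[OF gfun_cont[OF assms] leb_atLeast] .
  show gi: "gfun M k integrable_on {r..}"
    by (rule measurable_bounded_by_integrable_imp_integrable_real[OF ms _ bd leb_atLeast])
       (rule has_integral_integrable[OF hi2])
  have "integral {r..} (gfun M k) \<le> integral {r..} (\<lambda>x. (1/k^2) * x powr (-2))"
    apply (rule integral_le[OF gi has_integral_integrable[OF hi2]])
    using bd by (meson abs_ge_self order_trans)
  also have "\<dots> = 1 / (k^2 * r)" using integral_unique[OF hi2] by simp
  finally show "integral {r..} (gfun M k) \<le> 1 / (k^2 * r)" .
  show "integral {r..} (gfun M k) \<ge> 0"
  proof (rule integral_nonneg[OF gi])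
    fix x assume "x \<in> {r..}"
    hence x: "x \<ge> 3*M" using assms by simp
    show "0 \<le> gfun M k x" using gfun_bounds(3)[OF assms(1,2) x] by simp
  qed
qed

lemma gfun_cont_Icc:
  assumes "M > 0" "k > 0" "r \<ge> 3*M"
  shows "continuous_on {r..s} (gfun M k)"
  using gfun_cont[OF assms] by (rule continuous_on_subset) auto

lemma gfun_split:
  assumes "M > 0" "k > 0" "r \<ge> 3*M" "r \<le> s"
  shows "integral {r..} (gfun M k) = integral {r..s} (gfun M k) + integral {s..} (gfun M k)"
proof -
  have i1: "(gfun M k has_integral integral {r..s} (gfun M k)) {r..s}"
    by (intro integrable_integral integrable_continuous_interval gfun_cont_Icc assms)
  have s3: "s \<ge> 3*M" using assms by simp
  have i2: "(gfun M k has_integral integral {s..} (gfun M k)) {s..}"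
    by (intro integrable_integral gfun_int(1)[OF assms(1,2) s3])
  have ng: "negligible ({r..s} \<inter> {s..})"
    by (rule negligible_subset[of "{s}"]) auto
  have "(gfun M k has_integral (integral {r..s} (gfun M k) + integral {s..} (gfun M k))) ({r..s} \<union> {s..})"
    by (rule has_integral_Un[OF i1 i2 ng])
  moreover have "{r..s} \<union> {s..} = {r..}" using assms by auto
  ultimately show ?thesis by (simp add: integral_unique)
qed



lemma rstar_eq: "rstar M k r = pi/2 - integral {r..} (gfun M k)"
proof -
  have "gfun M k = (\<lambda>s. s^2 / Delta M k s)" by (rule ext) (simp add: gfun_def)
  thus ?thesis unfolding rstar_def by simp
qed

lemma rstar_diff:
  assumes "M > 0" "k > 0" "3*M \<le> r" "r \<le> s"
  shows "rstar M k s - rstar M k r = integral {r..s} (gfun M k)"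
  using gfun_split[OF assms] unfolding rstar_eq by simp

lemma int_pos:
  assumes "M > 0" "k > 0" "3*M \<le> r" "r < s"
  shows "integral {r..s} (gfun M k) > 0"
proof -
  define c where "c = 1 / (1 + k^2 * s^2)"
  have c: "c > 0" unfolding c_def by (simp add: add_pos_nonneg)
  have "integral {r..s} (\<lambda>x. c) \<le> integral {r..s} (gfun M k)"
  proof (rule integral_le)
    show "(\<lambda>x. c) integrable_on {r..s}" by (rule integrable_continuous_interval[OF continuous_on_const])
    show "gfun M k integrable_on {r..s}"
      by (intro integrable_continuous_interval gfun_cont_Icc assms)
    fix x assume x: "x \<in> {r..s}"
    hence x3: "3*M \<le> x" and xs: "x \<le> s" using assms by auto
    have x0: "0 \<le> x" using x3 assms by simp
    have "x^2 \<le> s^2" using x0 xs by (simp add: power_mono)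
    hence hh: "1 + k^2 * x^2 \<le> 1 + k^2 * s^2" by (simp add: mult_left_mono)
    have p1: "0 < 1 + k^2 * x^2" "0 < 1 + k^2 * s^2" by (simp_all add: add_pos_nonneg)
    have "c \<le> 1 / (1 + k^2 * x^2)" unfolding c_def
      using hh p1 by (auto intro!: divide_left_mono mult_pos_pos)
    also have "\<dots> \<le> gfun M k x" using gfun_bounds(2)[OF assms(1,2) x3] .
    finally show "c \<le> gfun M k x" .
  qed
  moreover have "integral {r..s} (\<lambda>x. c) = (s - r) * c" using assms by simp
  moreover have "(s - r) * c > 0" using assms c by simp
  ultimately show ?thesis by linarith
qed

lemma rstar_strict_mono:
  assumes "M > 0" "k > 0" "3*M \<le> r" "r < s"
  shows "rstar M k r < rstar M k s"
proof -
  have "rstar M k s - rstar M k r = integral {r..s} (gfun M k)" using rstar_diff[OF assms(1-3) less_imp_le[OF assms(4)]] .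
  thus ?thesis using int_pos[OF assms] by linarith
qed

lemma rstar_lt_b:
  assumes "M > 0" "k > 0" "3*M \<le> r"
  shows "rstar M k r < pi/2"
proof -
  have "rstar M k r < rstar M k (r+1)" by (rule rstar_strict_mono) (use assms in auto)
  also have "rstar M k (r+1) \<le> pi/2" unfolding rstar_eq using gfun_int(3)[OF assms(1,2), of "r+1"] assms by simp
  finally show ?thesis .
qed

lemma rstar_ge:
  assumes "M > 0" "k > 0" "3*M \<le> r"
  shows "rstar M k r \<ge> pi/2 - 1 / (k^2 * r)"
  unfolding rstar_eq using gfun_int(2)[OF assms] by simp

lemma rstar_cont:
  assumes "M > 0" "k > 0"
  shows "continuous_on {3*M..R} (rstar M k)"
proof -
  have m: "3*M \<le> 3*M" by simp
  have "continuous_on {3*M..R} (\<lambda>x. integral {3*M..x} (gfun M k))"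
    by (rule indefinite_integral_continuous_1, rule integrable_continuous_interval, rule gfun_cont_Icc[OF assms m])
  hence c: "continuous_on {3*M..R} (\<lambda>x. rstar M k (3*M) + integral {3*M..x} (gfun M k))"
    by (intro continuous_on_add continuous_on_const)
  have eq: "\<And>x. x \<in> {3*M..R} \<Longrightarrow> rstar M k (3*M) + integral {3*M..x} (gfun M k) = rstar M k x"
  proof -
    fix x assume "x \<in> {3*M..R}"
    hence "3*M \<le> x" by simp
    from rstar_diff[OF assms m this] show "rstar M k (3*M) + integral {3*M..x} (gfun M k) = rstar M k x" by simp
  qed
  show ?thesis by (rule continuous_on_eq[OF c eq])
qed

lemma rstar_exceeds:
  assumes "M > 0" "k > 0" "x < pi/2"
  shows "\<exists>R. R \<ge> 3*M \<and> rstar M k R > x"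
proof -
  define R where "R = 3*M + 1 / (k^2 * (pi/2 - x))"
  have p: "k^2 * (pi/2 - x) > 0" using assms by simp
  have h: "1 / (k^2 * (pi/2 - x)) > 0" using p by simp
  have R3: "R \<ge> 3*M" "R > 0" unfolding R_def using h assms(1) by linarith+
  have "R > 1 / (k^2 * (pi/2 - x))" unfolding R_def using assms by simp
  hence "R * (k^2 * (pi/2 - x)) > 1" using p by (simp add: field_simps)
  hence "1 / (k^2 * R) < pi/2 - x" using R3 assms by (simp add: field_simps)
  hence "rstar M k R > x" using rstar_ge[OF assms(1,2) R3(1)] by linarith
  thus ?thesis using R3 by blast
qed

lemma r_of_unique:
  assumes "M > 0" "k > 0" "3*M \<le> r1" "3*M \<le> r2" "rstar M k r1 = rstar M k r2"
  shows "r1 = r2"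
proof (rule ccontr)
  assume "r1 \<noteq> r2"
  hence "r1 < r2 \<or> r2 < r1" by auto
  thus False using rstar_strict_mono[OF assms(1,2) assms(3), of r2] rstar_strict_mono[OF assms(1,2) assms(4), of r1] assms(5) by auto
qed

lemma r_of_spec:
  assumes "M > 0" "k > 0" "rstar M k (3*M) \<le> x" "x < pi/2"
  shows "3*M \<le> r_of M k x" "rstar M k (r_of M k x) = x"
proof -
  obtain R where R: "R \<ge> 3*M" "rstar M k R > x" using rstar_exceeds[OF assms(1,2,4)] by blast
  have "\<exists>r\<ge>3*M. r \<le> R \<and> rstar M k r = x"
    by (rule IVT'[of "rstar M k"]) (use assms R rstar_cont[OF assms(1,2)] in auto)
  then obtain r where r: "3*M \<le> r" "rstar M k r = x" by blast
  have "\<exists>!r. 3*M \<le> r \<and> rstar M k r = x"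
    using r r_of_unique[OF assms(1,2)] by blast
  hence "3*M \<le> r_of M k x \<and> rstar M k (r_of M k x) = x"
    unfolding r_of_def by (rule theI')
  thus "3*M \<le> r_of M k x" "rstar M k (r_of M k x) = x" by auto
qed

lemma rstar_mono3:
  assumes "M > 0" "k > 0" "3*M \<le> r"
  shows "rstar M k (3*M) \<le> rstar M k r"
proof (cases "r = 3*M")
  case True then show ?thesis by simp
next
  case False then have "3*M < r" using assms by simp
  from rstar_strict_mono[OF assms(1,2) _ this] show ?thesis by simp
qed

lemma r_of_rstar:
  assumes "M > 0" "k > 0" "3*M \<le> r"
  shows "r_of M k (rstar M k r) = r"
proof -
  have a: "rstar M k (3*M) \<le> rstar M k r" by (rule rstar_mono3[OF assms])
  have b: "rstar M k r < pi/2" using rstar_lt_b[OF assms] .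
  show ?thesis using r_of_spec[OF assms(1,2) a b] r_of_unique[OF assms(1,2)] assms by blast
qed

lemma r_of_le:
  assumes "M > 0" "k > 0" "rstar M k (3*M) \<le> x" "x < pi/2" "x \<le> rstar M k R" "3*M \<le> R"
  shows "r_of M k x \<le> R"
proof (rule ccontr)
  assume "\<not> r_of M k x \<le> R"
  hence "rstar M k R < rstar M k (r_of M k x)" using rstar_strict_mono[OF assms(1,2) assms(6)] by simp
  thus False using r_of_spec[OF assms(1-4)] assms(5) by simp
qed

lemma r_of_ge:
  assumes "M > 0" "k > 0" "rstar M k R \<le> x" "x < pi/2" "3*M \<le> R"
  shows "r_of M k x \<ge> R"
proof (rule ccontr)
  have x: "rstar M k (3*M) \<le> x"
    using rstar_mono3[OF assms(1,2,5)] assms(3) by simp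
  assume "\<not> r_of M k x \<ge> R"
  hence "rstar M k (r_of M k x) < rstar M k R" using rstar_strict_mono[OF assms(1,2)] r_of_spec(1)[OF assms(1,2) x assms(4)] by simp
  thus False using r_of_spec[OF assms(1,2) x assms(4)] assms(3) by simp
qed

lemma r_of_cont:
  assumes "M > 0" "k > 0"
  shows "continuous_on {rstar M k (3*M)<..<pi/2} (r_of M k)"
proof (rule continuous_at_imp_continuous_on, rule ballI)
  fix x assume x: "x \<in> {rstar M k (3*M)<..<pi/2}"
  obtain R where R: "R \<ge> 3*M" "rstar M k R > x" using rstar_exceeds[OF assms] x by auto
  have c1: "continuous_on (rstar M k ` {3*M..R}) (r_of M k)"
    by (rule continuous_on_inv[OF rstar_cont[OF assms]]) (use r_of_rstar[OF assms] in auto)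
  have sub: "{rstar M k (3*M)<..<rstar M k R} \<subseteq> rstar M k ` {3*M..R}"
  proof
    fix y assume y: "y \<in> {rstar M k (3*M)<..<rstar M k R}"
    have yb: "y < pi/2" using y rstar_lt_b[OF assms R(1)] by auto
    have y1: "rstar M k (3*M) \<le> y" using y by auto
    have "r_of M k y \<in> {3*M..R}"
      using r_of_spec(1)[OF assms y1 yb] r_of_le[OF assms y1 yb _ R(1)] y by auto
    moreover have "y = rstar M k (r_of M k y)" using r_of_spec(2)[OF assms y1 yb] by simp
    ultimately show "y \<in> rstar M k ` {3*M..R}" by blast
  qed
  have c2: "continuous_on {rstar M k (3*M)<..<rstar M k R} (r_of M k)"
    using continuous_on_subset[OF c1 sub] .
  have "x \<in> interior {rstar M k (3*M)<..<rstar M k R}" using x R by auto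
  thus "isCont (r_of M k) x" using continuous_on_interior[OF c2] by blast
qed



lemma wr_bounds:
  fixes M r :: real
  assumes "M > 0" "r \<ge> 3*M"
  shows "0 \<le> (r - 2*M) / r^3" "(r - 2*M) / r^3 \<le> 1 / r^2" "(r - 2*M) / r^3 \<ge> 1 / (3 * r^2)"
    "0 \<le> 6*M/r" "6*M/r \<le> 2" "1 / r^2 \<le> 1 / (9*M^2)"
proof -
  have r: "r > 0" using assms by simp
  show "0 \<le> (r - 2*M) / r^3" using assms by simp
  have "(r - 2*M) / r^3 \<le> r / r^3" using r assms by (intro divide_right_mono) auto
  also have "r / r^3 = 1 / r^2" using r by (simp add: power2_eq_square power3_eq_cube)
  finally show "(r - 2*M) / r^3 \<le> 1 / r^2" .
  have "(r/3) / r^3 \<le> (r - 2*M) / r^3" using r assms by (intro divide_right_mono) auto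
  moreover have "(r/3) / r^3 = 1 / (3 * r^2)" using r by (simp add: power2_eq_square power3_eq_cube)
  ultimately show "(r - 2*M) / r^3 \<ge> 1 / (3 * r^2)" by simp
  show "0 \<le> 6*M/r" using assms r by simp
  show "6*M/r \<le> 2" using assms r by (simp add: divide_le_eq)
  have "(3*M)^2 \<le> r^2" using assms by (intro power_mono) auto
  hence "1 / r^2 \<le> 1 / (3*M)^2" using assms by (intro divide_left_mono) auto
  thus "1 / r^2 \<le> 1 / (9*M^2)" by (simp add: power_mult_distrib)
qed

lemma wstar_formula:
  assumes "M > 0" "k > 0" "rstar M k (3*M) \<le> x" "x < pi/2"
  shows "wstar M k x = k^2 + (r_of M k x - 2*M) / (r_of M k x)^3"
    "sixM_over_r M k x = 6*M / r_of M k x"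
proof -
  define r where "r = r_of M k x"
  have r3: "r \<ge> 3*M" using r_of_spec(1)[OF assms] unfolding r_def .
  hence r: "r > 0" using assms by simp
  have "Delta M k r / r^4 = k^2 + (r - 2*M) / r^3"
    unfolding Delta_def using r by (simp add: field_simps power2_eq_square power3_eq_cube power4_eq_xxxx)
  thus "wstar M k x = k^2 + (r_of M k x - 2*M) / (r_of M k x)^3"
    unfolding wstar_def r_def[symmetric] using assms(4) by simp
  show "sixM_over_r M k x = 6*M / r_of M k x" unfolding sixM_over_r_def using assms(4) by simp
qed

definition Wc :: "real \<Rightarrow> real \<Rightarrow> real" where "Wc M k = k^2 + 1 / (9*M^2)"

lemma wstar_bounds:
  assumes "M > 0" "k > 0" "rstar M k (3*M) \<le> x" "x \<le> pi/2"
  shows "k^2 \<le> wstar M k x" "wstar M k x \<le> Wc M k" "0 \<le> sixM_over_r M k x" "sixM_over_r M k x \<le> 2"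
proof -
  have W: "k^2 \<le> Wc M k" unfolding Wc_def using assms by simp
  have "(k^2 \<le> wstar M k x \<and> wstar M k x \<le> Wc M k) \<and> (0 \<le> sixM_over_r M k x \<and> sixM_over_r M k x \<le> 2)"
  proof (cases "x < pi/2")
    case True
    have r3: "r_of M k x \<ge> 3*M" using r_of_spec(1)[OF assms(1-3) True] .
    note f = wstar_formula[OF assms(1-3) True]
    note wb = wr_bounds[OF assms(1) r3]
    show ?thesis unfolding f Wc_def using wb by linarith
  next
    case False
    hence "x = pi/2" using assms by simp
    thus ?thesis unfolding wstar_def sixM_over_r_def using W by simp
  qed
  thus "k^2 \<le> wstar M k x" "wstar M k x \<le> Wc M k" "0 \<le> sixM_over_r M k x" "sixM_over_r M k x \<le> 2" by auto
qed

lemma Vpot_bounds: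
  assumes "M > 0" "k > 0" "rstar M k (3*M) \<le> x" "x \<le> pi/2" "l \<ge> 2"
  shows "0 \<le> Vpot M k l x" "Vpot M k l x \<le> real (l*(l+1)) * Wc M k"
    "Vpot M k l x \<ge> wstar M k x * real (l*(l+1)) - 2 * Wc M k"
    "Vpot M k l x \<le> wstar M k x * real (l*(l+1))"
proof -
  note wb = wstar_bounds[OF assms(1-4)]
  have L: "real (l*(l+1)) \<ge> 6"
  proof -
    have "l*(l+1) \<ge> 2*3" using assms(5) by (intro mult_mono) auto
    thus ?thesis by linarith
  qed
  define w where "w = wstar M k x"
  define s where "s = sixM_over_r M k x"
  define L where "L = real (l*(l+1))"
  have w0: "0 \<le> w" using wb(1) unfolding w_def by (smt (verit) zero_le_power2)
  have V: "Vpot M k l x = w * (L - s)" unfolding Vpot_def w_def s_def L_def by simp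
  have Ls: "0 \<le> L - s" "L - s \<le> L" using wb(3,4) L unfolding s_def L_def by auto
  show "0 \<le> Vpot M k l x" unfolding V using w0 Ls by simp
  have "w * (L - s) \<le> w * L" using w0 Ls by (intro mult_left_mono) auto
  thus "Vpot M k l x \<le> wstar M k x * real (l*(l+1))" unfolding V w_def L_def by simp
  also have "wstar M k x * real (l*(l+1)) \<le> Wc M k * real (l*(l+1))"
    using wb(2) L by (intro mult_right_mono) auto
  finally show "Vpot M k l x \<le> real (l*(l+1)) * Wc M k" by (simp add: mult.commute)
  have "w * s \<le> Wc M k * 2" using w0 wb(2,3,4) unfolding w_def s_def by (intro mult_mono) auto
  thus "Vpot M k l x \<ge> wstar M k x * real (l*(l+1)) - 2 * Wc M k"
    unfolding V w_def[symmetric] L_def[symmetric] by (simp add: algebra_simps)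
qed

lemma wstar_lower:
  assumes "M > 0" "k > 0" "rstar M k (3*M) \<le> x" "x \<le> rstar M k R1" "3*M \<le> R1"
  shows "wstar M k x \<ge> k^2 + 1 / (3 * R1^2)"
proof -
  have xb: "x < pi/2" using assms(4) rstar_lt_b[OF assms(1,2,5)] by simp
  define r where "r = r_of M k x"
  have r3: "r \<ge> 3*M" using r_of_spec(1)[OF assms(1-3) xb] unfolding r_def .
  have rR: "r \<le> R1" using r_of_le[OF assms(1-3) xb assms(4,5)] unfolding r_def .
  have "r^2 \<le> R1^2" using rR r3 assms by (intro power_mono) auto
  hence "1 / (3 * R1^2) \<le> 1 / (3 * r^2)" using r3 assms by (intro divide_left_mono) auto
  also have "\<dots> \<le> (r - 2*M) / r^3" using wr_bounds(3)[OF assms(1) r3] .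
  finally show ?thesis using wstar_formula(1)[OF assms(1-3) xb] unfolding r_def by simp
qed

lemma wstar_upper:
  assumes "M > 0" "k > 0" "rstar M k R2 \<le> x" "x \<le> pi/2" "3*M \<le> R2"
  shows "wstar M k x \<le> k^2 + 1 / R2^2"
proof (cases "x < pi/2")
  case True
  have x3: "rstar M k (3*M) \<le> x" using rstar_mono3[OF assms(1,2,5)] assms(3) by simp
  define r where "r = r_of M k x"
  have r3: "r \<ge> 3*M" using r_of_spec(1)[OF assms(1,2) x3 True] unfolding r_def .
  have rR: "r \<ge> R2" using r_of_ge[OF assms(1-3) True assms(5)] unfolding r_def .
  have "R2^2 \<le> r^2" using rR assms by (intro power_mono) auto
  moreover have "r > 0" "R2 > 0" using r3 assms by linarith+
  ultimately have "1 / r^2 \<le> 1 / R2^2" by (intro divide_left_mono) auto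
  moreover have "(r - 2*M) / r^3 \<le> 1 / r^2" using wr_bounds(2)[OF assms(1) r3] .
  ultimately show ?thesis using wstar_formula(1)[OF assms(1,2) x3 True] unfolding r_def by simp
next
  case False
  hence "x = pi/2" using assms by simp
  thus ?thesis unfolding wstar_def by simp
qed

lemma Vpot_cont:
  assumes "M > 0" "k > 0"
  shows "continuous_on {rstar M k (3*M)<..<pi/2} (Vpot M k l)"
proof -
  define F where "F = (\<lambda>x. (k^2 + (r_of M k x - 2*M) / (r_of M k x)^3) * (real (l*(l+1)) - 6*M / r_of M k x))"
  have nz: "\<forall>x\<in>{rstar M k (3*M)<..<pi/2}. r_of M k x \<noteq> 0"
  proof
    fix x assume x: "x \<in> {rstar M k (3*M)<..<pi/2}"
    have "r_of M k x \<ge> 3*M" using r_of_spec(1)[OF assms, of x] x by simp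
    thus "r_of M k x \<noteq> 0" using assms by simp
  qed
  have c: "continuous_on {rstar M k (3*M)<..<pi/2} F"
    unfolding F_def
    by (intro continuous_intros r_of_cont[OF assms]) (use nz in auto)
  have eq: "\<And>x. x \<in> {rstar M k (3*M)<..<pi/2} \<Longrightarrow> F x = Vpot M k l x"
  proof -
    fix x assume x: "x \<in> {rstar M k (3*M)<..<pi/2}"
    hence x1: "rstar M k (3*M) \<le> x" "x < pi/2" by auto
    show "F x = Vpot M k l x" unfolding F_def Vpot_def wstar_formula[OF assms x1] by simp
  qed
  show ?thesis by (rule continuous_on_eq[OF c eq])
qed



lemma leb_Ioo: "{c<..<d::real} \<in> sets lebesgue"
  by (metis borel_open open_greaterThanLessThan sets_completionI_sets sets_lborel)

lemma int_lin3:
  fixes f0 f1 f2 :: "real \<Rightarrow> real"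
  assumes "f0 integrable_on S" "f1 integrable_on S" "f2 integrable_on S"
  shows "integral S (\<lambda>x. f0 x + 2*t*f1 x + t^2*f2 x) = integral S f0 + 2*t*integral S f1 + t^2*integral S f2"
proof -
  have i1: "(\<lambda>x. 2*t*f1 x) integrable_on S" using integrable_on_cmult_left[OF assms(2), of "2*t"] by simp
  have i2: "(\<lambda>x. t^2*f2 x) integrable_on S" using integrable_on_cmult_left[OF assms(3), of "t^2"] by simp
  have "integral S (\<lambda>x. f0 x + 2*t*f1 x + t^2*f2 x) = integral S (\<lambda>x. f0 x + 2*t*f1 x) + integral S (\<lambda>x. t^2*f2 x)"
    by (rule integral_add[OF integrable_add[OF assms(1) i1] i2])
  also have "integral S (\<lambda>x. f0 x + 2*t*f1 x) = integral S f0 + integral S (\<lambda>x. 2*t*f1 x)"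
    by (rule integral_add[OF assms(1) i1])
  finally show ?thesis by simp
qed

lemma cont_int_sub:
  fixes f :: "real \<Rightarrow> real"
  assumes "continuous_on {a..b} f" "a \<le> c" "d \<le> b"
  shows "f integrable_on {c..d}"
  by (rule integrable_continuous_interval, rule continuous_on_subset[OF assms(1)]) (use assms in auto)

lemma Vint:
  fixes f g :: "real \<Rightarrow> real"
  assumes "M > 0" "k > 0" "l \<ge> 2" "rstar M k (3*M) \<le> c" "d \<le> pi/2"
    "continuous_on {rstar M k (3*M)..pi/2} f" "continuous_on {rstar M k (3*M)..pi/2} g"
  shows "(\<lambda>x. g x + Vpot M k l x * f x) integrable_on {c..d}"
proof -
  let ?a = "rstar M k (3*M)" and ?b = "pi/2::real"
  have gi: "g integrable_on {c..d}" by (rule cont_int_sub[OF assms(7,4,5)])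
  have "bounded (f ` {?a..?b})" by (rule compact_imp_bounded, rule compact_continuous_image[OF assms(6)]) simp
  then obtain B where B0: "\<forall>y\<in>f ` {?a..?b}. norm y \<le> B" unfolding bounded_iff by blast
  have B: "\<And>x. x \<in> {?a..?b} \<Longrightarrow> abs (f x) \<le> B" using B0 by auto
  define K where "K = real (l*(l+1)) * Wc M k * B"
  have sub: "{c<..<d} \<subseteq> {?a<..<?b}" using assms by auto
  have cf: "continuous_on {c<..<d} (\<lambda>x. Vpot M k l x * f x)"
  proof (rule continuous_on_mult)
    show "continuous_on {c<..<d} (Vpot M k l)" by (rule continuous_on_subset[OF Vpot_cont[OF assms(1,2)] sub])
    show "continuous_on {c<..<d} f" by (rule continuous_on_subset[OF assms(6)]) (use sub in auto)
  qed
  have ms: "(\<lambda>x. Vpot M k l x * f x) \<in> borel_measurable (lebesgue_on {c<..<d})"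
    by (rule continuous_imp_measurable_on_sets_lebesgue[OF cf leb_Ioo])
  have bd: "abs (Vpot M k l x * f x) \<le> K" if "x \<in> {c<..<d}" for x
  proof -
    have x: "x \<in> {?a..?b}" using that assms by auto
    have x1: "?a \<le> x" "x \<le> ?b" using x by auto
    note vb = Vpot_bounds[OF assms(1,2) x1 assms(3)]
    have "abs (Vpot M k l x * f x) = Vpot M k l x * abs (f x)" using vb(1) by (simp add: abs_mult)
    also have "\<dots> \<le> (real (l*(l+1)) * Wc M k) * B"
      using vb(1,2) B[OF x] by (intro mult_mono) auto
    finally show ?thesis unfolding K_def by simp
  qed
  have ki: "(\<lambda>x. K) integrable_on {c<..<d}"
    using integrable_on_Icc_iff_Ioo[of "\<lambda>x. K" c d] integrable_continuous_interval[OF continuous_on_const, of K c d] by simp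
  have "(\<lambda>x. Vpot M k l x * f x) integrable_on {c<..<d}"
    by (rule measurable_bounded_by_integrable_imp_integrable_real[OF ms ki bd leb_Ioo])
  hence "(\<lambda>x. Vpot M k l x * f x) integrable_on {c..d}" using integrable_on_Icc_iff_Ioo by blast
  from integrable_add[OF gi this] show ?thesis .
qed

lemma sq_int_pos:
  fixes S :: "real \<Rightarrow> real"
  assumes "a < b" "continuous_on {a..b} S" "x0 \<in> {a..b}" "S x0 \<noteq> 0"
  shows "integral {a..b} (\<lambda>x. (S x)^2) > 0"
proof -
  have c: "continuous_on {a..b} (\<lambda>x. (S x)^2)" by (intro continuous_intros assms(2))
  have i: "(\<lambda>x. (S x)^2) integrable_on {a..b}" by (rule integrable_continuous_interval[OF c])
  have nn: "integral {a..b} (\<lambda>x. (S x)^2) \<ge> 0" by (rule integral_nonneg[OF i]) simp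
  show ?thesis
  proof (rule ccontr)
    assume "\<not> ?thesis"
    hence z: "integral {a..b} (\<lambda>x. (S x)^2) = 0" using nn by simp
    have "(S x0)^2 = 0"
    proof (rule has_integral_0_cbox_imp_0[where f="\<lambda>x. (S x)^2" and a=a and b=b])
      show "continuous_on (cbox a b) (\<lambda>x. (S x)^2)" using c by simp
      show "\<And>x. x \<in> box a b \<Longrightarrow> 0 \<le> (S x)^2" by simp
      show "((\<lambda>x. (S x)^2) has_integral 0) (cbox a b)" using integrable_integral[OF i] z by simp
      show "box a b \<noteq> {}" using assms(1) by simp
      show "x0 \<in> cbox a b" using assms(3) by simp
    qed
    thus False using assms(4) by simp
  qed
qed

definition c1 :: "real \<Rightarrow> real \<Rightarrow> nat \<Rightarrow> real" where
  "c1 M k l = 6 * M * k^2 / (real (l * (l + 1)) - 2)"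
definition c2 :: "real \<Rightarrow> real \<Rightarrow> nat \<Rightarrow> real" where
  "c2 M k l = 12 * M / (real (l * (l + 1)) * (real (l * (l + 1)) - 2))"

lemma L_ge6: "l \<ge> 2 \<Longrightarrow> real (l*(l+1)) \<ge> 6"
proof -
  assume "l \<ge> 2"
  hence "l*(l+1) \<ge> 2*3" by (intro mult_mono) auto
  thus ?thesis by linarith
qed

lemma c_pos:
  assumes "M > 0" "k > 0" "l \<ge> 2"
  shows "c1 M k l > 0" "c2 M k l > 0" "c1 M k l \<le> 2 * M * k^2"
    "real (l*(l+1)) * c2 M k l \<le> 3 * M"
proof -
  have L: "real (l*(l+1)) \<ge> 6" using L_ge6[OF assms(3)] .
  show "c1 M k l > 0" unfolding c1_def using L assms by simp
  show "c2 M k l > 0" unfolding c2_def using L assms by simp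
  have "6 * M * k^2 / (real (l * (l + 1)) - 2) \<le> 6 * M * k^2 / 3"
    using L assms by (intro divide_left_mono) auto
  thus "c1 M k l \<le> 2 * M * k^2" unfolding c1_def by simp
  have "real (l*(l+1)) * c2 M k l = 12 * M / (real (l * (l + 1)) - 2)"
  proof -
    define L where "L = real (l*(l+1))"
    have "L \<noteq> 0" "L - 2 \<noteq> 0" using L unfolding L_def by auto
    hence "L * (12 * M / (L * (L - 2))) = 12 * M / (L - 2)" by (simp add: field_simps)
    thus ?thesis unfolding c2_def L_def by simp
  qed
  also have "\<dots> \<le> 12 * M / 4" using L assms by (intro divide_left_mono) auto
  finally show "real (l*(l+1)) * c2 M k l \<le> 3 * M" by simp
qed

lemma QM_num_alt:
  assumes "\<forall>x\<in>{rstar M k (3*M)..pi/2}. (S has_real_derivative D x) (at x)"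
  shows "QM_num M k l S = integral {rstar M k (3*M)..pi/2} (\<lambda>x. (D x)^2 + Vpot M k l x * (S x)^2) + c1 M k l * (S (pi/2))^2"
proof -
  have "integral {rstar M k (3*M)..pi/2} (\<lambda>x. (deriv S x)^2 + Vpot M k l x * (S x)^2)
      = integral {rstar M k (3*M)..pi/2} (\<lambda>x. (D x)^2 + Vpot M k l x * (S x)^2)"
  proof (rule integral_cong)
    fix x assume x: "x \<in> {rstar M k (3*M)..pi/2}"
    have "deriv S x = D x" by (rule DERIV_imp_deriv) (use assms x in blast)
    thus "(deriv S x)^2 + Vpot M k l x * (S x)^2 = (D x)^2 + Vpot M k l x * (S x)^2" by simp
  qed
  thus ?thesis unfolding QM_num_def c1_def by simp
qed

lemma QM_den_alt:
  "QM_den M k l S = integral {rstar M k (3*M)..pi/2} (\<lambda>x. (S x)^2) + c2 M k l * (S (pi/2))^2"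
  unfolding QM_den_def c2_def by simp

lemma adm_C1:
  assumes "QM_admissible M k S"
  obtains D where "\<forall>x\<in>{rstar M k (3*M)..pi/2}. (S has_real_derivative D x) (at x)"
    "continuous_on {rstar M k (3*M)..pi/2} D"
  using assms unfolding QM_admissible_def C1_differentiable_on_def has_real_derivative_iff_has_vector_derivative
  by blast

lemma deriv_cont:
  assumes "\<forall>x\<in>T. (S has_real_derivative D x) (at x)"
  shows "continuous_on T S"
  by (rule continuous_at_imp_continuous_on) (use assms DERIV_isCont in blast)

lemma C1_intro:
  assumes "\<forall>x\<in>T. (S has_real_derivative D x) (at x)" "continuous_on T D"
  shows "S C1_differentiable_on T"
  unfolding C1_differentiable_on_def using assms has_real_derivative_iff_has_vector_derivative by blast



lemma neg_aux:
  fixes A B s :: real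
  assumes "B \<noteq> 0" "s > 0" "s * abs A < 1"
  shows "2*(-B* s)*B + (-B* s)^2*A < 0"
proof -
  have e: "2*(-B* s)*B + (-B* s)^2*A = (B^2* s)*(s*A - 2)" by (simp add: algebra_simps power2_eq_square)
  have "s*A \<le> s*abs A" using assms(2) by (intro mult_left_mono) auto
  hence "s*A - 2 < 0" using assms(3) by linarith
  moreover have "B^2* s > 0" using assms by simp
  ultimately show ?thesis unfolding e by (simp add: mult_pos_neg)
qed

lemma den_pos:
  assumes "M > 0" "k > 0" "l \<ge> 2" "continuous_on {rstar M k (3*M)..pi/2} S"
    "x0 \<in> {rstar M k (3*M)..pi/2}" "S x0 \<noteq> 0"
  shows "QM_den M k l S > 0"
proof -
  have ab: "rstar M k (3*M) < pi/2" by (rule rstar_lt_b) (use assms in auto)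
  have "integral {rstar M k (3*M)..pi/2} (\<lambda>x. (S x)^2) > 0" by (rule sq_int_pos[OF ab assms(4-6)])
  moreover have "c2 M k l * (S (pi/2))^2 \<ge> 0" using c_pos(2)[OF assms(1-3)] by simp
  ultimately show ?thesis unfolding QM_den_alt by linarith
qed

lemma EL:
  fixes R E DR DE :: "real \<Rightarrow> real"
  assumes M: "M > 0" and k: "k > 0" and l: "l \<ge> 2" and RQ: "is_R_QM M k l R"
   and dR: "\<forall>x\<in>{rstar M k (3*M)..pi/2}. (R has_real_derivative DR x) (at x)"
   and cR: "continuous_on {rstar M k (3*M)..pi/2} DR"
   and dE: "\<forall>x\<in>{rstar M k (3*M)..pi/2}. (E has_real_derivative DE x) (at x)"
   and cE: "continuous_on {rstar M k (3*M)..pi/2} DE"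
   and E0: "E (rstar M k (3*M)) = 0"
  shows "integral {rstar M k (3*M)..pi/2} (\<lambda>x. DR x * DE x + Vpot M k l x * (R x * E x)) + c1 M k l * (R (pi/2) * E (pi/2))
     = (QM_num M k l R / QM_den M k l R) * (integral {rstar M k (3*M)..pi/2} (\<lambda>x. R x * E x) + c2 M k l * (R (pi/2) * E (pi/2)))"
proof -
  define a where "a = rstar M k (3*M)"
  define b where "b = (pi/2::real)"
  define I where "I = {a..b}"
  note defs = a_def[symmetric] b_def[symmetric] I_def[symmetric]
  have ab: "a < b" unfolding a_def b_def by (rule rstar_lt_b) (use M k in auto)
  have Radm: "QM_admissible M k R" and Rmin: "\<And>S. QM_admissible M k S \<Longrightarrow>
      QM_num M k l R / QM_den M k l R \<le> QM_num M k l S / QM_den M k l S"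
    using RQ unfolding is_R_QM_def by auto
  have Ra: "R a = 0" using Radm unfolding QM_admissible_def a_def by simp
  obtain x0 where x0: "x0 \<in> I" "R x0 \<noteq> 0" using Radm unfolding QM_admissible_def I_def a_def b_def by blast
  have contR: "continuous_on I R" using deriv_cont dR unfolding I_def a_def b_def by blast
  have contE: "continuous_on I E" using deriv_cont dE unfolding I_def a_def b_def by blast
  define q where "q = QM_num M k l R / QM_den M k l R"
  have dRpos: "QM_den M k l R > 0"
    by (rule den_pos[of M k l R x0, OF M k l]) (use contR x0 in \<open>simp_all add: I_def a_def b_def\<close>)
  have numR: "QM_num M k l R = q * QM_den M k l R" unfolding q_def using dRpos by simp
  define V where "V = Vpot M k l"
  define f0 where "f0 = (\<lambda>x. (DR x)^2 + V x * (R x)^2)"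
  define f1 where "f1 = (\<lambda>x. DR x * DE x + V x * (R x * E x))"
  define f2 where "f2 = (\<lambda>x. (DE x)^2 + V x * (E x)^2)"
  define g0 where "g0 = (\<lambda>x. (R x)^2)"
  define g1 where "g1 = (\<lambda>x. R x * E x)"
  define g2 where "g2 = (\<lambda>x. (E x)^2)"
  have aa: "rstar M k (3*M) \<le> a" "b \<le> pi/2" unfolding a_def b_def by auto
  have cI: "continuous_on {rstar M k (3*M)..pi/2} = continuous_on I" unfolding I_def a_def b_def by simp
  have cR': "continuous_on I DR" using cR unfolding I_def a_def b_def .
  have cE': "continuous_on I DE" using cE unfolding I_def a_def b_def .
  have iI: "\<And>f. f integrable_on {a..b} \<Longrightarrow> f integrable_on I" unfolding I_def by simp
  have cc: "continuous_on I (\<lambda>x. (DR x)^2)" "continuous_on I (\<lambda>x. (R x)^2)"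
    "continuous_on I (\<lambda>x. DR x * DE x)" "continuous_on I (\<lambda>x. R x * E x)"
    "continuous_on I (\<lambda>x. (DE x)^2)" "continuous_on I (\<lambda>x. (E x)^2)"
    by (intro continuous_on_power continuous_on_mult cR' cE' contR contE)+
  note cc' = cc[unfolded I_def a_def b_def]
  have if0: "f0 integrable_on I" unfolding f0_def V_def
    by (rule iI, rule Vint[OF M k l aa cc'(2) cc'(1)])
  have if1: "f1 integrable_on I" unfolding f1_def V_def
    by (rule iI, rule Vint[OF M k l aa cc'(4) cc'(3)])
  have if2: "f2 integrable_on I" unfolding f2_def V_def
    by (rule iI, rule Vint[OF M k l aa cc'(6) cc'(5)])
  have ig0: "g0 integrable_on I" unfolding g0_def I_def by (intro integrable_continuous_interval continuous_intros contR[unfolded I_def])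
  have ig1: "g1 integrable_on I" unfolding g1_def I_def by (intro integrable_continuous_interval continuous_intros contR[unfolded I_def] contE[unfolded I_def])
  have ig2: "g2 integrable_on I" unfolding g2_def I_def by (intro integrable_continuous_interval continuous_intros contE[unfolded I_def])
  have numR': "QM_num M k l R = integral I f0 + c1 M k l * (R b)^2"
    using QM_num_alt[OF dR] unfolding f0_def V_def I_def a_def b_def by simp
  have denR': "QM_den M k l R = integral I g0 + c2 M k l * (R b)^2"
    using QM_den_alt unfolding g0_def I_def a_def b_def by simp
  define BN where "BN = integral I f1 + c1 M k l * (R b * E b)"
  define BD where "BD = integral I g1 + c2 M k l * (R b * E b)"
  define nE where "nE = integral I f2 + c1 M k l * (E b)^2"
  define dE' where "dE' = integral I g2 + c2 M k l * (E b)^2"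
  have key: "0 \<le> 2*t*(BN - q*BD) + t^2*(nE - q*dE')" if nz: "\<exists>x\<in>I. R x + t * E x \<noteq> 0" for t
  proof -
    define S where "S = (\<lambda>x. R x + t * E x)"
    have dS: "\<forall>x\<in>{rstar M k (3*M)..pi/2}. (S has_real_derivative (DR x + t * DE x)) (at x)"
    proof
      fix x assume x: "x \<in> {rstar M k (3*M)..pi/2}"
      have r: "(R has_real_derivative DR x) (at x)" using dR x by blast
      have e: "(E has_real_derivative DE x) (at x)" using dE x by blast
      show "(S has_real_derivative (DR x + t * DE x)) (at x)"
        unfolding S_def by (intro DERIV_add DERIV_cmult r e)
    qed
    have cS: "continuous_on {rstar M k (3*M)..pi/2} (\<lambda>x. DR x + t * DE x)"
      by (intro continuous_intros cR cE)
    have Sa: "S (rstar M k (3*M)) = 0" unfolding S_def using Ra E0 unfolding a_def by simp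
    obtain x1 where x1: "x1 \<in> I" "S x1 \<noteq> 0" using nz unfolding S_def by blast
    have Sadm: "QM_admissible M k S" unfolding QM_admissible_def
      using C1_intro[OF dS cS] Sa x1 unfolding I_def a_def b_def by blast
    have contS: "continuous_on I S" using deriv_cont[OF dS] unfolding I_def a_def b_def .
    have dSpos: "QM_den M k l S > 0"
      by (rule den_pos[of M k l S x1, OF M k l]) (use contS x1 in \<open>simp_all add: I_def a_def b_def\<close>)
    have "q \<le> QM_num M k l S / QM_den M k l S" unfolding q_def by (rule Rmin[OF Sadm])
    hence le: "q * QM_den M k l S \<le> QM_num M k l S" using dSpos by (simp add: pos_le_divide_eq)
    have "QM_num M k l S = integral I (\<lambda>x. (DR x + t * DE x)^2 + V x * (S x)^2) + c1 M k l * (S b)^2"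
      using QM_num_alt[OF dS] unfolding V_def I_def a_def b_def by simp
    also have "integral I (\<lambda>x. (DR x + t * DE x)^2 + V x * (S x)^2) = integral I (\<lambda>x. f0 x + 2*t*f1 x + t^2*f2 x)"
      by (rule integral_cong) (simp add: S_def f0_def f1_def f2_def algebra_simps power2_eq_square)
    also have "\<dots> = integral I f0 + 2*t*integral I f1 + t^2*integral I f2" by (rule int_lin3[OF if0 if1 if2])
    finally have numS: "QM_num M k l S = QM_num M k l R + 2*t*BN + t^2*nE"
      unfolding numR' BN_def nE_def S_def by (simp add: algebra_simps power2_eq_square)
    have "QM_den M k l S = integral I (\<lambda>x. (S x)^2) + c2 M k l * (S b)^2"
      using QM_den_alt unfolding I_def a_def b_def by simp
    also have "integral I (\<lambda>x. (S x)^2) = integral I (\<lambda>x. g0 x + 2*t*g1 x + t^2*g2 x)"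
      by (rule integral_cong) (simp add: S_def g0_def g1_def g2_def algebra_simps power2_eq_square)
    also have "\<dots> = integral I g0 + 2*t*integral I g1 + t^2*integral I g2" by (rule int_lin3[OF ig0 ig1 ig2])
    finally have denS: "QM_den M k l S = QM_den M k l R + 2*t*BD + t^2*dE'"
      unfolding denR' BD_def dE'_def S_def by (simp add: algebra_simps power2_eq_square)
    have "0 \<le> QM_num M k l S - q * QM_den M k l S" using le by simp
    also have "\<dots> = 2*t*(BN - q*BD) + t^2*(nE - q*dE')"
      unfolding numS denS numR by (simp add: algebra_simps)
    finally show ?thesis .
  qed
  have B0: "BN - q*BD = 0"
  proof (rule ccontr)
    define A where "A = nE - q*dE'"
    define B where "B = BN - q*BD"
    assume "BN - q*BD \<noteq> 0"
    hence B: "B \<noteq> 0" unfolding B_def .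
    define s where "s = 1 / (abs A + 1)"
    have s: "s > 0" "s * abs A < 1" unfolding s_def by (auto simp: field_simps)
    have s2: "s/2 > 0" "(s/2) * abs A < 1" using s by auto
    have n1: "\<not> (\<exists>x\<in>I. R x + (-B* s) * E x \<noteq> 0)"
    proof
      assume "\<exists>x\<in>I. R x + (-B* s) * E x \<noteq> 0"
      from key[OF this] neg_aux[OF B s] show False unfolding A_def[symmetric] B_def[symmetric] by linarith
    qed
    have n2: "\<not> (\<exists>x\<in>I. R x + (-B*(s/2)) * E x \<noteq> 0)"
    proof
      assume "\<exists>x\<in>I. R x + (-B*(s/2)) * E x \<noteq> 0"
      from key[OF this] neg_aux[OF B s2] show False unfolding A_def[symmetric] B_def[symmetric] by linarith
    qed
    have e1: "R x0 + (-B* s) * E x0 = 0" using n1 x0(1) by blast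
    have e2: "R x0 + (-B*(s/2)) * E x0 = 0" using n2 x0(1) by blast
    have "(B* s/2) * E x0 = 0" using e1 e2 by (simp add: algebra_simps)
    hence "E x0 = 0" using B s by simp
    thus False using e1 x0(2) by simp
  qed
  hence "BN = q * BD" by simp
  thus ?thesis unfolding BN_def BD_def f1_def g1_def V_def q_def I_def a_def b_def .
qed



lemma pow_int:
  fixes a c d :: real
  assumes "c \<le> d"
  shows "((\<lambda>x. (x - a)^m) has_integral ((d-a)^(Suc m) - (c-a)^(Suc m)) / real (Suc m)) {c..d}"
proof -
  have "((\<lambda>x. (x - a)^m) has_integral ((\<lambda>x. (x-a)^(Suc m) / real (Suc m)) d - (\<lambda>x. (x-a)^(Suc m) / real (Suc m)) c)) {c..d}"
  proof (rule fundamental_theorem_of_calculus[where f="\<lambda>x. (x-a)^(Suc m) / real (Suc m)" and f'="\<lambda>x. (x-a)^m", OF assms])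
    fix x assume "x \<in> {c..d}"
    have aux: "\<And>n y z. (n::real) \<noteq> 0 \<Longrightarrow> (n * (1 * y) * n - z * 0) / (n * n) = y" by simp
    have "((\<lambda>x. (x-a)^(Suc m) / real (Suc m)) has_real_derivative (x-a)^m) (at x within {c..d})"
      apply (rule derivative_eq_intros refl)+
       apply simp
      apply (subst diff_Suc_Suc, subst diff_zero, subst diff_zero)
      by (rule aux) simp
    thus "((\<lambda>x. (x-a)^(Suc m) / real (Suc m)) has_vector_derivative (x-a)^m) (at x within {c..d})"
      using has_real_derivative_iff_has_vector_derivative by metis
  qed
  thus ?thesis by (simp add: diff_divide_distrib)
qed

lemma Vint0:
  fixes f :: "real \<Rightarrow> real"
  assumes "M > 0" "k > 0" "l \<ge> 2" "rstar M k (3*M) \<le> c" "d \<le> pi/2"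
    "continuous_on {rstar M k (3*M)..pi/2} f"
  shows "(\<lambda>x. Vpot M k l x * f x) integrable_on {c..d}"
  using Vint[OF assms continuous_on_const[of _ 0]] by simp



lemma q_upper:
  fixes \<epsilon> :: real
  assumes M: "M > 0" and k: "k > 0" and e: "\<epsilon> > 0"
  shows "\<exists>CS. \<forall>l\<ge>2. \<forall>R. is_R_QM M k l R \<longrightarrow>
           QM_num M k l R / QM_den M k l R \<le> (k^2 + 2*\<epsilon>) * real (l*(l+1)) + CS"
proof -
  define a where "a = rstar M k (3*M)"
  define b where "b = (pi/2::real)"
  have ab: "a < b" unfolding a_def b_def by (rule rstar_lt_b) (use M k in auto)
  define R2 where "R2 = 3*M + 1 / sqrt \<epsilon>"
  have se: "sqrt \<epsilon> > 0" using e by simp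
  have R23: "3*M \<le> R2" unfolding R2_def using se by simp
  have R2ge: "R2 \<ge> 1 / sqrt \<epsilon>" unfolding R2_def using M by simp
  have R2pos: "R2 > 0" using R2ge se by (smt (verit) divide_pos_pos)
  have "sqrt \<epsilon> * R2 \<ge> 1" using R2ge se by (simp add: field_simps)
  hence "(sqrt \<epsilon> * R2)^2 \<ge> 1" by (smt (verit) one_le_power)
  hence "\<epsilon> * R2^2 \<ge> 1" using e by (simp add: power_mult_distrib)
  hence R2e: "1 / R2^2 \<le> \<epsilon>" using R2pos by (simp add: divide_le_eq mult.commute)
  define x2 where "x2 = rstar M k R2"
  have ax2: "a \<le> x2" unfolding a_def x2_def by (rule rstar_mono3[OF M k R23])
  have x2b: "x2 < b" unfolding x2_def b_def by (rule rstar_lt_b[OF M k R23])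
  define W where "W = Wc M k"
  have W: "W > 0" unfolding W_def Wc_def using k M by (simp add: add_pos_nonneg)
  define \<rho> where "\<rho> = (x2 - a) / (b - a)"
  have \<rho>: "0 \<le> \<rho>" "\<rho> < 1" unfolding \<rho>_def using ab ax2 x2b by (auto simp: field_simps)
  obtain p where p: "\<rho>^p < \<epsilon> / W" using real_arch_pow_inv[of "\<epsilon>/W" \<rho>] e W \<rho> by auto
  define n where "n = Suc p"
  define m where "m = 2*n"
  have \<rho>m: "\<rho>^(Suc m) \<le> \<epsilon> / W"
  proof -
    have "\<rho>^(Suc m) \<le> \<rho>^p" by (rule power_decreasing) (use \<rho> in \<open>auto simp: m_def n_def\<close>)
    thus ?thesis using p by simp
  qed
  define S where "S = (\<lambda>x::real. (x - a)^n)"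
  define DS where "DS = (\<lambda>x::real. real n * ((1 - 0) * (x - a)^(n - Suc 0)))"
  have dS: "\<forall>x\<in>{rstar M k (3*M)..pi/2}. (S has_real_derivative DS x) (at x)"
    unfolding S_def DS_def by (intro ballI DERIV_power derivative_intros)
  have cDS: "continuous_on {rstar M k (3*M)..pi/2} DS" unfolding DS_def by (intro continuous_intros)
  have cS: "continuous_on {rstar M k (3*M)..pi/2} S" unfolding S_def by (intro continuous_intros)
  have cS2: "continuous_on {rstar M k (3*M)..pi/2} (\<lambda>x. (S x)^2)" by (intro continuous_intros cS)
  have Sa: "S a = 0" unfolding S_def n_def by simp
  have Sb: "S b \<noteq> 0" unfolding S_def using ab by simp
  have Sadm: "QM_admissible M k S" unfolding QM_admissible_def
    using C1_intro[OF dS cDS] Sa Sb ab unfolding a_def b_def by auto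
  have S2: "\<And>x. (S x)^2 = (x - a)^m" unfolding S_def m_def by (simp add: power_mult[symmetric] mult.commute)
  define T where "T = (b - a)^(Suc m) / real (Suc m)"
  have Tpos: "T > 0" unfolding T_def using ab by simp
  have intS: "\<And>c d. c \<le> d \<Longrightarrow> integral {c..d} (\<lambda>x. (S x)^2) = ((d-a)^(Suc m) - (c-a)^(Suc m)) / real (Suc m)"
    unfolding S2 using pow_int integral_unique by blast
  have T_eq: "integral {a..b} (\<lambda>x. (S x)^2) = T" unfolding T_def using intS[of a b] ab by simp
  define T1 where "T1 = integral {a..x2} (\<lambda>x. (S x)^2)"
  have T1_eq: "T1 = \<rho>^(Suc m) * T"
  proof -
    have "T1 = (x2 - a)^(Suc m) / real (Suc m)" unfolding T1_def using intS[of a x2] ax2 by simp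
    also have "(x2 - a) = \<rho> * (b - a)" unfolding \<rho>_def using ab by simp
    finally show ?thesis unfolding T_def by (simp add: power_mult_distrib)
  qed
  have T1pos: "T1 \<ge> 0" unfolding T1_def by (rule integral_nonneg) (auto intro: cont_int_sub[OF cS2[unfolded a_def[symmetric] b_def[symmetric]]] simp: ab ax2 x2b less_imp_le)
  define K0 where "K0 = integral {a..b} (\<lambda>x. (DS x)^2) + 2*M*k^2 * (S b)^2"
  have K0: "K0 \<ge> 0" unfolding K0_def
    by (intro add_nonneg_nonneg integral_nonneg integrable_continuous_interval continuous_intros cDS[unfolded a_def[symmetric] b_def[symmetric]]) (use M in auto)
  show ?thesis
  proof (intro exI allI impI)
    fix l :: nat and R assume l: "l \<ge> 2" and RQ: "is_R_QM M k l R"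
    define L where "L = real (l*(l+1))"
    have L6: "L \<ge> 6" unfolding L_def by (rule L_ge6[OF l])
    have "QM_num M k l R / QM_den M k l R \<le> QM_num M k l S / QM_den M k l S"
      using RQ Sadm unfolding is_R_QM_def by blast
    have iV: "\<And>c d. a \<le> c \<Longrightarrow> d \<le> b \<Longrightarrow> (\<lambda>x. Vpot M k l x * (S x)^2) integrable_on {c..d}"
      using Vint0[OF M k l _ _ cS2] unfolding a_def b_def by blast
    have iS2: "\<And>c d. a \<le> c \<Longrightarrow> d \<le> b \<Longrightarrow> (\<lambda>x. (S x)^2) integrable_on {c..d}"
      using cont_int_sub[OF cS2] unfolding a_def b_def by blast
    have iDS: "(\<lambda>x. (DS x)^2) integrable_on {a..b}"
      by (intro integrable_continuous_interval continuous_intros cDS[unfolded a_def[symmetric] b_def[symmetric]])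
    have numS: "QM_num M k l S = integral {a..b} (\<lambda>x. (DS x)^2) + integral {a..b} (\<lambda>x. Vpot M k l x * (S x)^2) + c1 M k l * (S b)^2"
      using QM_num_alt[OF dS] integral_add[OF iDS iV[of a b, OF order_refl order_refl]] unfolding a_def b_def by simp
    have split: "integral {a..b} (\<lambda>x. Vpot M k l x * (S x)^2) = integral {a..x2} (\<lambda>x. Vpot M k l x * (S x)^2) + integral {x2..b} (\<lambda>x. Vpot M k l x * (S x)^2)"
      using Henstock_Kurzweil_Integration.integral_combine[OF ax2 less_imp_le[OF x2b] iV[of a b, OF order_refl order_refl]] by simp
    have p1: "integral {a..x2} (\<lambda>x. Vpot M k l x * (S x)^2) \<le> integral {a..x2} (\<lambda>x. (L * W) * (S x)^2)"
    proof (rule integral_le)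
      show "(\<lambda>x. Vpot M k l x * (S x)^2) integrable_on {a..x2}" using iV x2b by simp
      show "(\<lambda>x. (L * W) * (S x)^2) integrable_on {a..x2}"
        using integrable_on_cmult_left[OF iS2[of a x2, OF order_refl less_imp_le[OF x2b]], of "L*W"] by simp
      fix x assume x: "x \<in> {a..x2}"
      hence x1: "rstar M k (3*M) \<le> x" "x \<le> pi/2" using x2b unfolding a_def b_def by auto
      have "Vpot M k l x \<le> L * W" using Vpot_bounds(2)[OF M k x1 l] unfolding L_def W_def .
      thus "Vpot M k l x * (S x)^2 \<le> (L * W) * (S x)^2" by (simp add: mult_right_mono)
    qed
    have p2: "integral {x2..b} (\<lambda>x. Vpot M k l x * (S x)^2) \<le> integral {x2..b} (\<lambda>x. ((k^2 + \<epsilon>) * L) * (S x)^2)"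
    proof (rule integral_le)
      show "(\<lambda>x. Vpot M k l x * (S x)^2) integrable_on {x2..b}" using iV ax2 by simp
      show "(\<lambda>x. ((k^2 + \<epsilon>) * L) * (S x)^2) integrable_on {x2..b}"
        using integrable_on_cmult_left[OF iS2[of x2 b, OF ax2 order_refl], of "(k^2 + \<epsilon>) * L"] by simp
      fix x assume x: "x \<in> {x2..b}"
      hence x1: "rstar M k (3*M) \<le> x" "x \<le> pi/2" using ax2 unfolding a_def b_def by auto
      have xx: "rstar M k R2 \<le> x" using x unfolding x2_def by simp
      have "wstar M k x \<le> k^2 + 1 / R2^2" by (rule wstar_upper[OF M k xx x1(2) R23])
      hence "wstar M k x \<le> k^2 + \<epsilon>" using R2e by simp
      hence "Vpot M k l x \<le> (k^2 + \<epsilon>) * L"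
        using Vpot_bounds(4)[OF M k x1 l] L6 unfolding L_def by (smt (verit) mult_right_mono)
      thus "Vpot M k l x * (S x)^2 \<le> ((k^2 + \<epsilon>) * L) * (S x)^2" by (simp add: mult_right_mono)
    qed
    have e1: "integral {a..x2} (\<lambda>x. (L * W) * (S x)^2) = L * W * T1" unfolding T1_def by simp
    have e2: "integral {x2..b} (\<lambda>x. ((k^2 + \<epsilon>) * L) * (S x)^2) = (k^2 + \<epsilon>) * L * (T - T1)"
    proof -
      have "integral {a..x2} (\<lambda>x. (S x)^2) + integral {x2..b} (\<lambda>x. (S x)^2) = integral {a..b} (\<lambda>x. (S x)^2)"
        by (rule Henstock_Kurzweil_Integration.integral_combine[OF ax2 less_imp_le[OF x2b] iS2[of a b, OF order_refl order_refl]])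
      hence "integral {x2..b} (\<lambda>x. (S x)^2) = T - T1" unfolding T1_def T_eq by simp
      thus ?thesis by simp
    qed
    have WT1: "W * T1 \<le> \<epsilon> * T"
    proof -
      have "W * T1 = (W * \<rho>^(Suc m)) * T" unfolding T1_eq by simp
      also have "W * \<rho>^(Suc m) \<le> \<epsilon>" using \<rho>m W by (simp add: pos_le_divide_eq mult.commute)
      hence "(W * \<rho>^(Suc m)) * T \<le> \<epsilon> * T" using Tpos by (simp add: mult_right_mono)
      finally show ?thesis .
    qed
    have kT: "(k^2 + \<epsilon>) * L * (T - T1) \<le> (k^2 + \<epsilon>) * L * T"
      using T1pos L6 e by (intro mult_left_mono) auto
    have "integral {a..b} (\<lambda>x. Vpot M k l x * (S x)^2) \<le> L * W * T1 + (k^2 + \<epsilon>) * L * T"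
      using split p1[unfolded e1] p2[unfolded e2] kT by linarith
    also have "L * W * T1 \<le> L * (\<epsilon> * T)" using WT1 L6 mult_left_mono[OF WT1, of L] by (simp add: mult.assoc)
    finally have VS: "integral {a..b} (\<lambda>x. Vpot M k l x * (S x)^2) \<le> (k^2 + 2*\<epsilon>) * L * T"
      by (simp add: algebra_simps)
    have c1b: "c1 M k l * (S b)^2 \<le> 2*M*k^2 * (S b)^2" using c_pos(3)[OF M k l] by (simp add: mult_right_mono)
    have numle: "QM_num M k l S \<le> K0 + (k^2 + 2*\<epsilon>) * L * T"
      unfolding numS K0_def using VS c1b by simp
    have denS: "QM_den M k l S \<ge> T"
      using QM_den_alt[of M k l S] T_eq c_pos(2)[OF M k l] unfolding a_def b_def by simp
    have X0: "K0 + (k^2 + 2*\<epsilon>) * L * T \<ge> 0" using K0 L6 Tpos e by simp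
    have "QM_num M k l S / QM_den M k l S \<le> (K0 + (k^2 + 2*\<epsilon>) * L * T) / QM_den M k l S"
      using numle denS Tpos by (intro divide_right_mono) auto
    also have "\<dots> \<le> (K0 + (k^2 + 2*\<epsilon>) * L * T) / T"
      using denS Tpos X0 by (intro divide_left_mono) auto
    also have "\<dots> = (k^2 + 2*\<epsilon>) * L + K0 / T" using Tpos by (simp add: field_simps)
    finally show "QM_num M k l R / QM_den M k l R \<le> (k^2 + 2*\<epsilon>) * real (l*(l+1)) + K0 / T"
      using \<open>QM_num M k l R / QM_den M k l R \<le> QM_num M k l S / QM_den M k l S\<close> unfolding L_def by linarith
  qed
qed



lemma Rb_bound:
  fixes R DR :: "real \<Rightarrow> real"
  assumes "a \<le> b" "\<forall>x\<in>{a..b}. (R has_real_derivative DR x) (at x)" "continuous_on {a..b} DR" "R a = 0"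
  shows "(R b)^2 \<le> integral {a..b} (\<lambda>x. (R x)^2 + (DR x)^2)"
proof -
  have cR: "continuous_on {a..b} R" using deriv_cont[OF assms(2)] .
  have ftc: "((\<lambda>x. DR x * R x + DR x * R x) has_integral (R b * R b - R a * R a)) {a..b}"
  proof (rule fundamental_theorem_of_calculus[where f="\<lambda>x. R x * R x", OF assms(1)])
    fix x assume x: "x \<in> {a..b}"
    have "(R has_real_derivative DR x) (at x)" using assms(2) x by blast
    hence "((\<lambda>x. R x * R x) has_real_derivative (DR x * R x + DR x * R x)) (at x)"
      using DERIV_mult by blast
    thus "((\<lambda>x. R x * R x) has_vector_derivative (DR x * R x + DR x * R x)) (at x within {a..b})"
      using has_real_derivative_iff_has_vector_derivative has_vector_derivative_at_within by blast
  qed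
  have "(R b)^2 = integral {a..b} (\<lambda>x. DR x * R x + DR x * R x)"
    using integral_unique[OF ftc] assms(4) by (simp add: power2_eq_square)
  also have "\<dots> \<le> integral {a..b} (\<lambda>x. (R x)^2 + (DR x)^2)"
  proof (rule integral_le)
    show "(\<lambda>x. DR x * R x + DR x * R x) integrable_on {a..b}" using ftc by blast
    show "(\<lambda>x. (R x)^2 + (DR x)^2) integrable_on {a..b}"
      by (intro integrable_continuous_interval continuous_intros cR assms(3))
    fix x
    have "0 \<le> (R x - DR x)^2" by simp
    thus "DR x * R x + DR x * R x \<le> (R x)^2 + (DR x)^2" by (simp add: power2_eq_square algebra_simps)
  qed
  finally show ?thesis .
qed



lemma agmon:
  fixes R DR :: "real \<Rightarrow> real" and \<mu> \<gamma> r0 x1 :: real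
  assumes M: "M > 0" and k: "k > 0" and l: "l \<ge> 2" and RQ: "is_R_QM M k l R"
   and dR: "\<forall>x\<in>{rstar M k (3*M)..pi/2}. (R has_real_derivative DR x) (at x)"
   and cR: "continuous_on {rstar M k (3*M)..pi/2} DR"
   and r0: "rstar M k (3*M) \<le> r0" "r0 \<le> x1" "x1 \<le> pi/2"
   and mu: "\<mu> \<ge> 0" and g: "\<gamma> \<ge> 0"
   and gap: "\<forall>x\<in>{rstar M k (3*M)..x1}. Vpot M k l x - QM_num M k l R / QM_den M k l R - \<mu>^2 \<ge> \<gamma>"
  shows "exp (2*\<mu>*(pi/2 - r0)) * integral {rstar M k (3*M)..r0} (\<lambda>x. (DR x - \<mu> * R x)^2 + \<gamma> * (R x)^2)
     \<le> exp (2*\<mu>*(pi/2 - x1)) * (QM_num M k l R + \<mu>^2 * QM_den M k l R)"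
proof -
  define a where "a = rstar M k (3*M)"
  define b where "b = (pi/2::real)"
  define I where "I = {a..b}"
  have ab: "a < b" unfolding a_def b_def by (rule rstar_lt_b) (use M k in auto)
  have r0': "a \<le> r0" "r0 \<le> x1" "x1 \<le> b" using r0 unfolding a_def b_def by auto
  have Radm: "QM_admissible M k R" using RQ unfolding is_R_QM_def by auto
  have Ra: "R a = 0" using Radm unfolding QM_admissible_def a_def by simp
  obtain x0 where x0: "x0 \<in> I" "R x0 \<noteq> 0" using Radm unfolding QM_admissible_def I_def a_def b_def by blast
  have contR: "continuous_on I R" using deriv_cont dR unfolding I_def a_def b_def by blast
  have cR': "continuous_on I DR" using cR unfolding I_def a_def b_def .
  define q where "q = QM_num M k l R / QM_den M k l R"
  define V where "V = Vpot M k l"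
  have dRpos: "QM_den M k l R > 0"
    by (rule den_pos[of M k l R x0, OF M k l]) (use contR x0 in \<open>simp_all add: I_def a_def b_def\<close>)
  have VI: "\<And>x. x \<in> I \<Longrightarrow> 0 \<le> V x" unfolding V_def I_def a_def b_def using Vpot_bounds(1)[OF M k _ _ l] by auto
  have numR: "QM_num M k l R = integral I (\<lambda>x. (DR x)^2 + V x * (R x)^2) + c1 M k l * (R b)^2"
    using QM_num_alt[OF dR] unfolding V_def I_def a_def b_def by simp
  have cc0: "continuous_on {rstar M k (3*M)..pi/2} (\<lambda>x. (DR x)^2)" "continuous_on {rstar M k (3*M)..pi/2} (\<lambda>x. (R x)^2)"
    using cR contR unfolding I_def a_def b_def by (intro continuous_intros; simp)+
  have num0: "QM_num M k l R \<ge> 0"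
  proof -
    have "integral I (\<lambda>x. (DR x)^2 + V x * (R x)^2) \<ge> 0"
      by (rule integral_nonneg) (use Vint[OF M k l _ _ cc0(2) cc0(1)] VI in \<open>auto simp: I_def a_def b_def V_def\<close>)
    moreover have "c1 M k l * (R b)^2 \<ge> 0" using c_pos(1)[OF M k l] by simp
    ultimately show ?thesis unfolding numR by simp
  qed
  have q0: "q \<ge> 0" unfolding q_def using num0 dRpos by simp
  have qD: "q * QM_den M k l R = QM_num M k l R" unfolding q_def using dRpos by simp
  define \<psi> where "\<psi> = (\<lambda>x. exp (2*\<mu>*(b - x)))"
  have d\<psi>: "\<And>x. (\<psi> has_real_derivative (-2*\<mu>*\<psi> x)) (at x)"
    unfolding \<psi>_def by (auto intro!: derivative_eq_intros)
  have c\<psi>: "continuous_on I \<psi>" unfolding \<psi>_def by (intro continuous_intros)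
  have \<psi>b: "\<psi> b = 1" unfolding \<psi>_def by simp
  have \<psi>mono: "\<And>x y. x \<le> y \<Longrightarrow> \<psi> y \<le> \<psi> x" unfolding \<psi>_def using mu by (simp add: mult_left_mono)
  have \<psi>pos: "\<And>x. \<psi> x > 0" unfolding \<psi>_def by simp
  define E where "E = (\<lambda>x. \<psi> x * R x)"
  define DE where "DE = (\<lambda>x. (-2*\<mu>*\<psi> x) * R x + DR x * \<psi> x)"
  have dE: "\<forall>x\<in>{rstar M k (3*M)..pi/2}. (E has_real_derivative DE x) (at x)"
  proof
    fix x assume x: "x \<in> {rstar M k (3*M)..pi/2}"
    have r: "(R has_real_derivative DR x) (at x)" using dR x by blast
    show "(E has_real_derivative DE x) (at x)" unfolding E_def DE_def by (rule DERIV_mult[OF d\<psi> r])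
  qed
  have cE: "continuous_on {rstar M k (3*M)..pi/2} DE"
    unfolding DE_def using c\<psi> contR cR' unfolding I_def a_def b_def by (intro continuous_intros; simp)+
  have E0: "E (rstar M k (3*M)) = 0" unfolding E_def using Ra a_def by simp
  note EL' = EL[OF M k l RQ dR cR dE cE E0]
  have Eb: "E b = R b" unfolding E_def \<psi>b by simp
  define G where "G = (\<lambda>x. \<psi> x * ((DR x - \<mu> * R x)^2 + (V x - q - \<mu>^2) * (R x)^2))"
  have Gform: "G = (\<lambda>x. (\<psi> x * (DR x - \<mu> * R x)^2 - (q + \<mu>^2) * (\<psi> x * (R x)^2)) + V x * (\<psi> x * (R x)^2))"
    unfolding G_def by (rule ext) (simp add: algebra_simps)
  have cG1: "continuous_on {rstar M k (3*M)..pi/2} (\<lambda>x. \<psi> x * (DR x - \<mu> * R x)^2 - (q + \<mu>^2) * (\<psi> x * (R x)^2))"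
    using c\<psi> contR cR' unfolding I_def a_def b_def by (intro continuous_intros; simp)+
  have cG2: "continuous_on {rstar M k (3*M)..pi/2} (\<lambda>x. \<psi> x * (R x)^2)"
    using c\<psi> contR unfolding I_def a_def b_def by (intro continuous_intros; simp)+
  have iG: "\<And>c d. a \<le> c \<Longrightarrow> d \<le> b \<Longrightarrow> G integrable_on {c..d}"
    unfolding Gform V_def using Vint[OF M k l _ _ cG2 cG1] unfolding a_def b_def by blast
  have cf1: "continuous_on {rstar M k (3*M)..pi/2} (\<lambda>x. DR x * DE x)" "continuous_on {rstar M k (3*M)..pi/2} (\<lambda>x. R x * E x)"
    using cR cE contR c\<psi> unfolding I_def a_def b_def E_def by (intro continuous_intros; simp)+
  have if1: "(\<lambda>x. DR x * DE x + V x * (R x * E x)) integrable_on I"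
    unfolding V_def I_def using Vint[OF M k l _ _ cf1(2) cf1(1)] unfolding a_def b_def by blast
  have ig1: "(\<lambda>x. R x * E x) integrable_on I"
    using integrable_continuous_interval[OF cf1(2)] unfolding I_def a_def b_def .
  have Gid: "\<And>x. DR x * DE x + V x * (R x * E x) - q * (R x * E x) = G x"
    unfolding G_def DE_def E_def by (simp add: algebra_simps power2_eq_square)
  have intG: "integral I G = integral I (\<lambda>x. DR x * DE x + V x * (R x * E x)) - q * integral I (\<lambda>x. R x * E x)"
  proof -
    have "integral I (\<lambda>x. DR x * DE x + V x * (R x * E x) - q * (R x * E x))
        = integral I (\<lambda>x. DR x * DE x + V x * (R x * E x)) - integral I (\<lambda>x. q * (R x * E x))"
      by (rule integral_diff[OF if1 integrable_on_cmult_left[OF ig1, of q, simplified]])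
    moreover have "integral I (\<lambda>x. q * (R x * E x)) = q * integral I (\<lambda>x. R x * E x)" by simp
    moreover have "(\<lambda>x. DR x * DE x + V x * (R x * E x) - q * (R x * E x)) = G" using Gid by (rule ext)
    ultimately show ?thesis by simp
  qed
  have EL2: "integral I (\<lambda>x. DR x * DE x + V x * (R x * E x)) + c1 M k l * (R b * E b)
      = q * (integral I (\<lambda>x. R x * E x) + c2 M k l * (R b * E b))"
    using EL' unfolding q_def[symmetric] V_def[symmetric] a_def[symmetric] b_def[symmetric] I_def[symmetric] .
  have EL3: "integral I (\<lambda>x. DR x * DE x + V x * (R x * E x)) + c1 M k l * (R b * E b)
      = q * integral I (\<lambda>x. R x * E x) + q * (c2 M k l * (R b * E b))"
    using EL2 by (simp only: distrib_left)
  have IG0: "integral I G = q * (c2 M k l * (R b * E b)) - c1 M k l * (R b * E b)"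
    using EL3 intG by linarith
  have IG: "integral I G \<le> q * c2 M k l * (R b)^2"
  proof -
    have "c1 M k l * (R b * E b) \<ge> 0" unfolding Eb using c_pos(1)[OF M k l] by simp
    moreover have "q * (c2 M k l * (R b * E b)) = q * c2 M k l * (R b)^2" unfolding Eb by (simp add: power2_eq_square mult.assoc)
    ultimately show ?thesis using IG0 by linarith
  qed
  define H where "H = (\<lambda>x. (DR x - \<mu> * R x)^2 + \<gamma> * (R x)^2)"
  have iH: "H integrable_on {a..r0}" unfolding H_def
    by (rule cont_int_sub[of a b]) (use contR cR' r0' in \<open>auto simp: I_def intro!: continuous_intros\<close>)
  have iR2: "\<And>c d. a \<le> c \<Longrightarrow> d \<le> b \<Longrightarrow> (\<lambda>x. (R x)^2) integrable_on {c..d}"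
    by (rule cont_int_sub[of a b]) (use contR in \<open>auto simp: I_def intro!: continuous_intros\<close>)
  have s1: "\<psi> r0 * integral {a..r0} H \<le> integral {a..r0} G"
  proof -
    have "integral {a..r0} (\<lambda>x. \<psi> r0 * H x) \<le> integral {a..r0} G"
    proof (rule integral_le)
      show "(\<lambda>x. \<psi> r0 * H x) integrable_on {a..r0}" using integrable_on_cmult_left[OF iH, of "\<psi> r0"] by simp
      show "G integrable_on {a..r0}" using iG r0' by simp
      fix x assume x: "x \<in> {a..r0}"
      have xI: "x \<in> {rstar M k (3*M)..x1}" using x r0' unfolding a_def by auto
      have gx: "V x - q - \<mu>^2 \<ge> \<gamma>" using gap xI unfolding V_def q_def by blast
      have "\<gamma> * (R x)^2 \<le> (V x - q - \<mu>^2) * (R x)^2" using gx by (simp add: mult_right_mono)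
      hence HB: "H x \<le> (DR x - \<mu> * R x)^2 + (V x - q - \<mu>^2) * (R x)^2" unfolding H_def by simp
      have H0: "H x \<ge> 0" unfolding H_def using g by simp
      have "\<psi> r0 \<le> \<psi> x" using \<psi>mono x by simp
      hence "\<psi> r0 * H x \<le> \<psi> x * ((DR x - \<mu> * R x)^2 + (V x - q - \<mu>^2) * (R x)^2)"
        using HB H0 \<psi>pos[of r0] by (intro mult_mono) auto
      thus "\<psi> r0 * H x \<le> G x" unfolding G_def .
    qed
    thus ?thesis by simp
  qed
  have s2: "0 \<le> integral {r0..x1} G"
  proof (rule integral_nonneg)
    show "G integrable_on {r0..x1}" using iG r0' by simp
    fix x assume x: "x \<in> {r0..x1}"
    have xI: "x \<in> {rstar M k (3*M)..x1}" using x r0' unfolding a_def by auto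
    have gx: "V x - q - \<mu>^2 \<ge> \<gamma>" using gap xI unfolding V_def q_def by blast
    have "0 \<le> (V x - q - \<mu>^2) * (R x)^2" using gx g by simp
    thus "0 \<le> G x" unfolding G_def using \<psi>pos[of x] by simp
  qed
  have s3: "- (\<psi> x1 * (q + \<mu>^2)) * integral {x1..b} (\<lambda>x. (R x)^2) \<le> integral {x1..b} G"
  proof -
    have "integral {x1..b} (\<lambda>x. - (\<psi> x1 * (q + \<mu>^2)) * (R x)^2) \<le> integral {x1..b} G"
    proof (rule integral_le)
      show "(\<lambda>x. - (\<psi> x1 * (q + \<mu>^2)) * (R x)^2) integrable_on {x1..b}"
        using integrable_on_cmult_left[OF iR2[of x1 b], of "- (\<psi> x1 * (q + \<mu>^2))"] r0' by simp
      show "G integrable_on {x1..b}" using iG r0' by simp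
      fix x assume x: "x \<in> {x1..b}"
      have xI: "x \<in> I" using x r0' unfolding I_def by auto
      have "(DR x - \<mu> * R x)^2 + (V x - q - \<mu>^2) * (R x)^2 \<ge> - (q + \<mu>^2) * (R x)^2"
        using VI[OF xI] by (simp add: algebra_simps)
      hence "\<psi> x * ((DR x - \<mu> * R x)^2 + (V x - q - \<mu>^2) * (R x)^2) \<ge> \<psi> x * (- (q + \<mu>^2) * (R x)^2)"
        using \<psi>pos[of x] by (simp add: mult_left_mono)
      moreover have "\<psi> x * ((q + \<mu>^2) * (R x)^2) \<le> \<psi> x1 * ((q + \<mu>^2) * (R x)^2)"
        using \<psi>mono[of x1 x] x q0 by (intro mult_right_mono) auto
      ultimately show "- (\<psi> x1 * (q + \<mu>^2)) * (R x)^2 \<le> G x" unfolding G_def by (simp add: algebra_simps)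
    qed
    thus ?thesis by simp
  qed
  have split1: "integral {a..r0} G + integral {r0..b} G = integral I G"
    unfolding I_def by (rule Henstock_Kurzweil_Integration.integral_combine) (use r0' iG in auto)
  have split2: "integral {r0..x1} G + integral {x1..b} G = integral {r0..b} G"
    by (rule Henstock_Kurzweil_Integration.integral_combine) (use r0' iG in auto)
  have R2sub: "integral {x1..b} (\<lambda>x. (R x)^2) \<le> integral I (\<lambda>x. (R x)^2)"
  proof -
    have "integral {a..x1} (\<lambda>x. (R x)^2) + integral {x1..b} (\<lambda>x. (R x)^2) = integral {a..b} (\<lambda>x. (R x)^2)"
      by (rule Henstock_Kurzweil_Integration.integral_combine) (use r0' iR2 in auto)
    moreover have "integral {a..x1} (\<lambda>x. (R x)^2) \<ge> 0" by (rule integral_nonneg) (use iR2 r0' in auto)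
    ultimately show ?thesis unfolding I_def by simp
  qed
  have \<psi>1: "\<psi> x1 \<ge> 1" using \<psi>mono[of x1 b] r0' \<psi>b by simp
  have Kq: "\<psi> x1 * (q + \<mu>^2) \<ge> 0" using \<psi>pos[of x1] q0 by simp
  have A: "\<psi> r0 * integral {a..r0} H \<le> q * c2 M k l * (R b)^2 + \<psi> x1 * (q + \<mu>^2) * integral I (\<lambda>x. (R x)^2)"
  proof -
    have "\<psi> x1 * (q + \<mu>^2) * integral {x1..b} (\<lambda>x. (R x)^2) \<le> \<psi> x1 * (q + \<mu>^2) * integral I (\<lambda>x. (R x)^2)"
      by (rule mult_left_mono[OF R2sub Kq])
    thus ?thesis using s1 s2 s3 split1 split2 IG by simp
  qed
  have B: "q * c2 M k l * (R b)^2 \<le> \<psi> x1 * (q + \<mu>^2) * (c2 M k l * (R b)^2)"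
  proof -
    have c20: "c2 M k l * (R b)^2 \<ge> 0" using c_pos(2)[OF M k l] by simp
    have "q \<le> \<psi> x1 * (q + \<mu>^2)"
    proof -
      have "q \<le> q + \<mu>^2" by simp
      also have "\<dots> \<le> \<psi> x1 * (q + \<mu>^2)" proof -
        have "0 \<le> q + \<mu>^2" using q0 by simp
        from mult_right_mono[OF \<psi>1 this] show ?thesis by simp
      qed
      finally show ?thesis .
    qed
    from mult_right_mono[OF this c20] show ?thesis by (simp add: mult.assoc)
  qed
  have den: "QM_den M k l R = integral I (\<lambda>x. (R x)^2) + c2 M k l * (R b)^2"
    using QM_den_alt unfolding I_def a_def b_def by simp
  have "\<psi> r0 * integral {a..r0} H \<le> \<psi> x1 * (q + \<mu>^2) * QM_den M k l R"
    using A B unfolding den by (simp add: algebra_simps)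
  also have "\<psi> x1 * (q + \<mu>^2) * QM_den M k l R = \<psi> x1 * (QM_num M k l R + \<mu>^2 * QM_den M k l R)"
    using qD by (simp add: algebra_simps)
  finally show ?thesis unfolding \<psi>_def H_def a_def b_def .
qed



lemma main_bound:
  fixes R :: "real \<Rightarrow> real" and \<epsilon> CS r0 x1 :: real
  assumes M: "M > 0" and k: "k > 0" and l: "l \<ge> 2" and RQ: "is_R_QM M k l R"
    and r0: "rstar M k (3*M) \<le> r0" "r0 < x1" "x1 < pi/2"
    and e: "\<epsilon> > 0"
    and wl: "\<forall>x\<in>{rstar M k (3*M)..x1}. wstar M k x \<ge> k^2 + 4*\<epsilon>"
    and qb: "QM_num M k l R / QM_den M k l R \<le> (k^2 + 2*\<epsilon>) * real (l*(l+1)) + CS"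
    and big: "\<epsilon> * real (l*(l+1)) \<ge> 2 * Wc M k + CS"
  shows "integral {rstar M k (3 * M) .. r0} (\<lambda>x. (deriv R x)^2 + real (l * (l + 1)) * (R x)^2)
    \<le> ((3 + 2/\<epsilon>) * (1 + Wc M k + 2*M*k^2 + (\<epsilon>/4)*(1 + 3*M))) * exp (- (sqrt \<epsilon> * (x1 - r0)) * real l) *
       integral {rstar M k (3 * M) .. pi / 2} (\<lambda>x. (deriv R x)^2 + real (l * (l + 1)) * (R x)^2)"
proof -
  define a where "a = rstar M k (3*M)"
  define b where "b = (pi/2::real)"
  define I where "I = {a..b}"
  define L where "L = real (l*(l+1))"
  define W where "W = Wc M k"
  have W: "W > 0" unfolding W_def Wc_def using k M by (simp add: add_pos_nonneg)
  have L6: "L \<ge> 6" unfolding L_def by (rule L_ge6[OF l])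
  have Ll: "L \<ge> (real l)^2"
  proof -
    have "l*l \<le> l*(l+1)" by simp
    hence "real (l*l) \<le> L" unfolding L_def by linarith
    thus ?thesis by (simp add: power2_eq_square)
  qed
  have r0': "a \<le> r0" "r0 \<le> x1" "x1 \<le> b" using r0 unfolding a_def b_def by auto
  have Radm: "QM_admissible M k R" using RQ unfolding is_R_QM_def by auto
  obtain DR where dR: "\<forall>x\<in>{rstar M k (3*M)..pi/2}. (R has_real_derivative DR x) (at x)"
    and cR: "continuous_on {rstar M k (3*M)..pi/2} DR" by (rule adm_C1[OF Radm])
  have Ra: "R a = 0" using Radm unfolding QM_admissible_def a_def by simp
  have contR: "continuous_on I R" using deriv_cont dR unfolding I_def a_def b_def by blast
  have cR': "continuous_on I DR" using cR unfolding I_def a_def b_def .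
  have derivR: "\<And>x. x \<in> I \<Longrightarrow> deriv R x = DR x"
    by (rule DERIV_imp_deriv) (use dR in \<open>auto simp: I_def a_def b_def\<close>)
  define q where "q = QM_num M k l R / QM_den M k l R"
  define \<mu> where "\<mu> = sqrt (\<epsilon> * L) / 2"
  define \<gamma> where "\<gamma> = \<epsilon> * L / 2"
  have eL: "\<epsilon> * L > 0" using e L6 by (intro mult_pos_pos) auto
  have mu0: "\<mu> \<ge> 0" unfolding \<mu>_def using eL by simp
  have mu2: "\<mu>^2 = \<epsilon> * L / 4" unfolding \<mu>_def using less_imp_le[OF eL] by (simp add: power_divide)
  have g0: "\<gamma> \<ge> 0" unfolding \<gamma>_def using eL by simp
  have gap: "\<forall>x\<in>{rstar M k (3*M)..x1}. Vpot M k l x - QM_num M k l R / QM_den M k l R - \<mu>^2 \<ge> \<gamma>"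
  proof
    fix x assume x: "x \<in> {rstar M k (3*M)..x1}"
    have x1': "rstar M k (3*M) \<le> x" "x \<le> pi/2" using x r0 by auto
    have V1: "Vpot M k l x \<ge> wstar M k x * L - 2 * W" using Vpot_bounds(3)[OF M k x1' l] unfolding L_def W_def .
    have "wstar M k x * L \<ge> (k^2 + 4*\<epsilon>) * L" using wl x L6 by (intro mult_right_mono) auto
    hence "Vpot M k l x \<ge> k^2 * L + 4 * (\<epsilon> * L) - 2 * W" using V1 by (simp add: algebra_simps)
    moreover have "q \<le> k^2 * L + 2 * (\<epsilon> * L) + CS" using qb unfolding q_def L_def by (simp add: algebra_simps)
    moreover have "\<epsilon> * L \<ge> 2 * W + CS" using big unfolding L_def W_def .
    ultimately show "Vpot M k l x - QM_num M k l R / QM_den M k l R - \<mu>^2 \<ge> \<gamma>"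
      unfolding q_def[symmetric] mu2 \<gamma>_def using eL by linarith
  qed
  have AG: "exp (2*\<mu>*(pi/2 - r0)) * integral {rstar M k (3*M)..r0} (\<lambda>x. (DR x - \<mu> * R x)^2 + \<gamma> * (R x)^2)
     \<le> exp (2*\<mu>*(pi/2 - x1)) * (QM_num M k l R + \<mu>^2 * QM_den M k l R)"
    by (rule agmon[OF M k l RQ dR cR r0(1) less_imp_le[OF r0(2)] less_imp_le[OF r0(3)] mu0 g0 gap])
  define J where "J = integral {a..r0} (\<lambda>x. (DR x - \<mu> * R x)^2 + \<gamma> * (R x)^2)"
  define N where "N = QM_num M k l R"
  define D where "D = QM_den M k l R"
  define d where "d = x1 - r0"
  have d0: "d > 0" unfolding d_def using r0 by simp
  have J: "J \<le> exp (- (2*\<mu>*d)) * (N + \<mu>^2 * D)"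
  proof -
    have "exp (2*\<mu>*(b - r0)) = exp (2*\<mu>*(b - x1) + 2*\<mu>*d)" unfolding d_def by (simp add: algebra_simps)
    hence "exp (2*\<mu>*(b - r0)) = exp (2*\<mu>*(b - x1)) * exp (2*\<mu>*d)" by (simp add: exp_add)
    hence "exp (2*\<mu>*(b - x1)) * (exp (2*\<mu>*d) * J) \<le> exp (2*\<mu>*(b - x1)) * (N + \<mu>^2 * D)"
      using AG unfolding J_def N_def D_def a_def b_def by (simp add: mult.assoc)
    hence "exp (2*\<mu>*d) * J \<le> N + \<mu>^2 * D" by simp
    hence "J \<le> (N + \<mu>^2 * D) / exp (2*\<mu>*d)" by (simp add: pos_le_divide_eq mult.commute)
    thus ?thesis by (simp add: exp_minus divide_inverse mult.commute)
  qed
  define E where "E = integral I (\<lambda>x. (DR x)^2 + L * (R x)^2)"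
  have iE: "\<And>c d. a \<le> c \<Longrightarrow> d \<le> b \<Longrightarrow> (\<lambda>x. (DR x)^2 + L * (R x)^2) integrable_on {c..d}"
    by (rule cont_int_sub[of a b]) (use contR cR' in \<open>auto simp: I_def intro!: continuous_intros\<close>)
  have iR2: "\<And>c d. a \<le> c \<Longrightarrow> d \<le> b \<Longrightarrow> (\<lambda>x. (R x)^2) integrable_on {c..d}"
    by (rule cont_int_sub[of a b]) (use contR in \<open>auto simp: I_def intro!: continuous_intros\<close>)
  have iD2: "\<And>c d. a \<le> c \<Longrightarrow> d \<le> b \<Longrightarrow> (\<lambda>x. (DR x)^2) integrable_on {c..d}"
    by (rule cont_int_sub[of a b]) (use cR' in \<open>auto simp: I_def intro!: continuous_intros\<close>)
  have iRD: "(\<lambda>x. (R x)^2 + (DR x)^2) integrable_on I"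
    unfolding I_def by (rule cont_int_sub[of a b]) (use contR cR' in \<open>auto simp: I_def intro!: continuous_intros\<close>)
  have E0: "E \<ge> 0" unfolding E_def using iE[of a b] L6 unfolding I_def by (intro integral_nonneg) auto
  have RbE: "(R b)^2 \<le> E"
  proof -
    have "(R b)^2 \<le> integral {a..b} (\<lambda>x. (R x)^2 + (DR x)^2)"
      by (rule Rb_bound) (use r0' dR cR Ra in \<open>auto simp: a_def b_def\<close>)
    also have "\<dots> \<le> E" unfolding E_def I_def
    proof (rule integral_le)
      show "(\<lambda>x. (R x)^2 + (DR x)^2) integrable_on {a..b}" using iRD unfolding I_def .
      show "(\<lambda>x. (DR x)^2 + L * (R x)^2) integrable_on {a..b}" using iE by simp
      fix x
      have "(R x)^2 \<le> L * (R x)^2" using L6 by (simp add: mult_le_cancel_right1)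
      thus "(R x)^2 + (DR x)^2 \<le> (DR x)^2 + L * (R x)^2" by simp
    qed
    finally show ?thesis .
  qed
  have LR2: "L * integral I (\<lambda>x. (R x)^2) \<le> E"
  proof -
    have "integral I (\<lambda>x. L * (R x)^2) \<le> E" unfolding E_def I_def
    proof (rule integral_le)
      show "(\<lambda>x. L * (R x)^2) integrable_on {a..b}" using integrable_on_cmult_left[OF iR2[of a b], of L] by simp
      show "(\<lambda>x. (DR x)^2 + L * (R x)^2) integrable_on {a..b}" using iE by simp
      fix x show "L * (R x)^2 \<le> (DR x)^2 + L * (R x)^2" by simp
    qed
    thus ?thesis by simp
  qed
  have NE: "N \<le> (1 + W + 2*M*k^2) * E"
  proof -
    have numR: "N = integral I (\<lambda>x. (DR x)^2 + Vpot M k l x * (R x)^2) + c1 M k l * (R b)^2"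
      using QM_num_alt[OF dR] unfolding N_def I_def a_def b_def by simp
    have cc0: "continuous_on {rstar M k (3*M)..pi/2} (\<lambda>x. (DR x)^2)" "continuous_on {rstar M k (3*M)..pi/2} (\<lambda>x. (R x)^2)"
      using cR contR unfolding I_def a_def b_def by (intro continuous_intros; simp)+
    have "integral I (\<lambda>x. (DR x)^2 + Vpot M k l x * (R x)^2) \<le> integral I (\<lambda>x. (1 + W) * ((DR x)^2 + L * (R x)^2))"
    proof (rule integral_le)
      show "(\<lambda>x. (DR x)^2 + Vpot M k l x * (R x)^2) integrable_on I"
        using Vint[OF M k l _ _ cc0(2) cc0(1)] unfolding I_def a_def b_def by simp
      show "(\<lambda>x. (1 + W) * ((DR x)^2 + L * (R x)^2)) integrable_on I"
        using integrable_on_cmult_left[OF iE[of a b], of "1+W"] unfolding I_def by simp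
      fix x assume x: "x \<in> I"
      hence x1': "rstar M k (3*M) \<le> x" "x \<le> pi/2" unfolding I_def a_def b_def by auto
      have "Vpot M k l x \<le> L * W" using Vpot_bounds(2)[OF M k x1' l] unfolding L_def W_def .
      also have "\<dots> \<le> (1 + W) * L" using L6 by (simp add: algebra_simps)
      finally have "Vpot M k l x * (R x)^2 \<le> ((1 + W) * L) * (R x)^2" by (simp add: mult_right_mono)
      moreover have "(DR x)^2 \<le> (1 + W) * (DR x)^2" using W by (simp add: mult_le_cancel_right1)
      ultimately show "(DR x)^2 + Vpot M k l x * (R x)^2 \<le> (1 + W) * ((DR x)^2 + L * (R x)^2)"
        by (simp add: algebra_simps)
    qed
    also have "\<dots> = (1 + W) * E" unfolding E_def by simp
    finally have i1: "integral I (\<lambda>x. (DR x)^2 + Vpot M k l x * (R x)^2) \<le> (1 + W) * E" .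
    have "c1 M k l * (R b)^2 \<le> 2*M*k^2 * (R b)^2" using c_pos(3)[OF M k l] by (simp add: mult_right_mono)
    also have "\<dots> \<le> 2*M*k^2 * E" using RbE M by (intro mult_left_mono) auto
    finally show ?thesis using i1 numR by (simp add: algebra_simps)
  qed
  have DE: "\<mu>^2 * D \<le> (\<epsilon>/4) * (1 + 3*M) * E"
  proof -
    have den: "D = integral I (\<lambda>x. (R x)^2) + c2 M k l * (R b)^2"
      using QM_den_alt unfolding D_def I_def a_def b_def by simp
    have "\<mu>^2 * D = (\<epsilon>/4) * (L * integral I (\<lambda>x. (R x)^2) + (L * c2 M k l) * (R b)^2)"
      unfolding mu2 den by (simp add: algebra_simps)
    also have "L * c2 M k l * (R b)^2 \<le> 3*M * E"
    proof -
      have "L * c2 M k l * (R b)^2 \<le> 3*M * (R b)^2" using c_pos(4)[OF M k l] unfolding L_def by (simp add: mult_right_mono)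
      also have "\<dots> \<le> 3*M * E" using RbE M by (intro mult_left_mono) auto
      finally show ?thesis .
    qed
    hence "(\<epsilon>/4) * (L * integral I (\<lambda>x. (R x)^2) + (L * c2 M k l) * (R b)^2) \<le> (\<epsilon>/4) * (E + 3*M*E)"
      using LR2 e by (intro mult_left_mono) auto
    finally show ?thesis by (simp add: algebra_simps)
  qed
  define K where "K = 3 + 2/\<epsilon>"
  define C4 where "C4 = 1 + W + 2*M*k^2 + (\<epsilon>/4)*(1 + 3*M)"
  have K: "K \<ge> 2" unfolding K_def using e by simp
  have NDE: "N + \<mu>^2 * D \<le> C4 * E" unfolding C4_def using NE DE by (simp add: algebra_simps)
  have lhs: "integral {a..r0} (\<lambda>x. (DR x)^2 + L * (R x)^2) \<le> K * J"
  proof -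
    have "integral {a..r0} (\<lambda>x. (DR x)^2 + L * (R x)^2) \<le> integral {a..r0} (\<lambda>x. K * ((DR x - \<mu> * R x)^2 + \<gamma> * (R x)^2))"
    proof (rule integral_le)
      show "(\<lambda>x. (DR x)^2 + L * (R x)^2) integrable_on {a..r0}" using iE r0' by simp
      have hh: "(\<lambda>x. (DR x - \<mu> * R x)^2 + \<gamma> * (R x)^2) integrable_on {a..r0}"
        by (rule cont_int_sub[of a b]) (use contR cR' r0' in \<open>auto simp: I_def intro!: continuous_intros\<close>)
      show "(\<lambda>x. K * ((DR x - \<mu> * R x)^2 + \<gamma> * (R x)^2)) integrable_on {a..r0}"
        using integrable_on_cmult_left[OF hh, of K] by simp
      fix x
      define u where "u = DR x - \<mu> * R x"
      define v where "v = R x"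
      have Dx: "DR x = u + \<mu> * v" unfolding u_def v_def by simp
      have "(u + \<mu> * v)^2 \<le> 2 * u^2 + 2 * \<mu>^2 * v^2"
      proof -
        have "0 \<le> (u - \<mu> * v)^2" by simp
        thus ?thesis by (simp add: power2_eq_square algebra_simps)
      qed
      moreover have "2 * u^2 \<le> K * u^2" using K by (simp add: mult_right_mono)
      moreover have "(2 * \<mu>^2 + L) * v^2 \<le> (K * \<gamma>) * v^2"
      proof (rule mult_right_mono)
        have "K * \<gamma> = 3 * (\<epsilon> * L) / 2 + L" unfolding K_def \<gamma>_def using e by (simp add: field_simps)
        thus "2 * \<mu>^2 + L \<le> K * \<gamma>" unfolding mu2 using e L6 by simp
      qed simp
      ultimately show "(DR x)^2 + L * (R x)^2 \<le> K * ((DR x - \<mu> * R x)^2 + \<gamma> * (R x)^2)"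
        unfolding Dx u_def[symmetric] v_def[symmetric] by (simp add: algebra_simps)
    qed
    also have "\<dots> = K * J" unfolding J_def by simp
    finally show ?thesis .
  qed
  have expb: "exp (- (2*\<mu>*d)) \<le> exp (- (sqrt \<epsilon> * d) * real l)"
  proof -
    have "sqrt (\<epsilon> * L) \<ge> sqrt \<epsilon> * real l"
    proof -
      have "sqrt L \<ge> real l" using real_le_rsqrt[OF Ll] .
      hence "sqrt \<epsilon> * sqrt L \<ge> sqrt \<epsilon> * real l" by (rule mult_left_mono) (use e in simp)
      thus ?thesis by (simp add: real_sqrt_mult)
    qed
    hence "2*\<mu>*d \<ge> sqrt \<epsilon> * real l * d" unfolding \<mu>_def using d0 by (simp add: mult_right_mono)
    thus ?thesis by (simp add: algebra_simps)
  qed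
  have J0: "J \<ge> 0" unfolding J_def
  proof (rule integral_nonneg)
    show "(\<lambda>x. (DR x - \<mu> * R x)^2 + \<gamma> * (R x)^2) integrable_on {a..r0}"
      by (rule cont_int_sub[of a b]) (use contR cR' r0' in \<open>auto simp: I_def intro!: continuous_intros\<close>)
    fix x show "0 \<le> (DR x - \<mu> * R x)^2 + \<gamma> * (R x)^2" using g0 by simp
  qed
  have "integral {a..r0} (\<lambda>x. (DR x)^2 + L * (R x)^2) \<le> K * (exp (- (2*\<mu>*d)) * (C4 * E))"
  proof -
    have "J \<le> exp (- (2*\<mu>*d)) * (C4 * E)" using J NDE by (meson exp_gt_zero less_imp_le mult_left_mono order_trans)
    thus ?thesis using lhs K by (smt (verit) mult_left_mono)
  qed
  also have "\<dots> \<le> K * (exp (- (sqrt \<epsilon> * d) * real l) * (C4 * E))"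
  proof -
    have "C4 \<ge> 0" unfolding C4_def using W M k e by simp
    hence "C4 * E \<ge> 0" using E0 by simp
    thus ?thesis using expb K by (intro mult_left_mono mult_right_mono) auto
  qed
  finally have fin: "integral {a..r0} (\<lambda>x. (DR x)^2 + L * (R x)^2) \<le> (K * C4) * exp (- (sqrt \<epsilon> * d) * real l) * E"
    by (simp add: algebra_simps)
  have eqL: "integral {a..r0} (\<lambda>x. (deriv R x)^2 + L * (R x)^2) = integral {a..r0} (\<lambda>x. (DR x)^2 + L * (R x)^2)"
    by (rule integral_cong) (use derivR r0' in \<open>auto simp: I_def\<close>)
  have eqE: "integral {a..b} (\<lambda>x. (deriv R x)^2 + L * (R x)^2) = E"
    unfolding E_def I_def by (rule integral_cong) (use derivR in \<open>auto simp: I_def\<close>)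
  show ?thesis using fin unfolding eqL[unfolded a_def L_def] eqE[unfolded a_def b_def L_def] K_def C4_def W_def d_def L_def a_def .
qed



lemma integral_nonneg_any:
  fixes f :: "real \<Rightarrow> real"
  assumes "\<And>x. x \<in> S \<Longrightarrow> 0 \<le> f x"
  shows "0 \<le> integral S f"
proof (cases "f integrable_on S")
  case True thus ?thesis using integral_nonneg assms by blast
next
  case False thus ?thesis by (simp add: not_integrable_integral)
qed

theorem lemma4p13:
  fixes M k r0 :: real
  assumes "M > 0" and "k > 0"
    and "rstar M k (3 * M) < r0" and "r0 < pi / 2"
  shows "\<exists>C > 0. \<exists>L0 :: nat. \<forall>l \<ge> L0. \<forall>R. is_R_QM M k l R \<longrightarrow>
           integral {rstar M k (3 * M) .. r0}
             (\<lambda>x. (deriv R x)^2 + real (l * (l + 1)) * (R x)^2)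
           \<le> C * exp (- real l / C) *
             integral {rstar M k (3 * M) .. pi / 2}
             (\<lambda>x. (deriv R x)^2 + real (l * (l + 1)) * (R x)^2)"
proof -
  note M = assms(1) and k = assms(2)
  obtain R1 where R1: "R1 \<ge> 3*M" "rstar M k R1 > r0" using rstar_exceeds[OF M k assms(4)] by blast
  define x1 where "x1 = rstar M k R1"
  have x1b: "x1 < pi/2" unfolding x1_def by (rule rstar_lt_b[OF M k R1(1)])
  have r0x1: "r0 < x1" unfolding x1_def using R1 by simp
  have R1pos: "R1 > 0" using R1 M by simp
  define \<epsilon> where "\<epsilon> = 1 / (12 * R1^2)"
  have e: "\<epsilon> > 0" unfolding \<epsilon>_def using R1pos by simp
  have wl: "\<forall>x\<in>{rstar M k (3*M)..x1}. wstar M k x \<ge> k^2 + 4*\<epsilon>"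
  proof
    fix x assume x: "x \<in> {rstar M k (3*M)..x1}"
    have "wstar M k x \<ge> k^2 + 1 / (3 * R1^2)"
      by (rule wstar_lower[OF M k _ _ R1(1)]) (use x in \<open>auto simp: x1_def\<close>)
    moreover have "4*\<epsilon> = 1 / (3 * R1^2)" unfolding \<epsilon>_def by simp
    ultimately show "wstar M k x \<ge> k^2 + 4*\<epsilon>" by simp
  qed
  obtain CS where CS: "\<forall>l\<ge>2. \<forall>R. is_R_QM M k l R \<longrightarrow>
           QM_num M k l R / QM_den M k l R \<le> (k^2 + 2*\<epsilon>) * real (l*(l+1)) + CS"
    using q_upper[OF M k e] by blast
  define Kc where "Kc = (3 + 2/\<epsilon>) * (1 + Wc M k + 2*M*k^2 + (\<epsilon>/4)*(1 + 3*M))"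
  define c where "c = sqrt \<epsilon> * (x1 - r0)"
  have c: "c > 0" unfolding c_def using e r0x1 by simp
  have Kc: "Kc > 0" unfolding Kc_def Wc_def using e M k by (intro mult_pos_pos add_pos_nonneg) auto
  define C where "C = max Kc (1/c)"
  have C: "C > 0" "Kc \<le> C" "1/c \<le> C" unfolding C_def using Kc by auto
  have Cc: "1/C \<le> c"
  proof -
    have "1/C \<le> 1/(1/c)" using C c by (intro divide_left_mono) auto
    thus ?thesis using c by simp
  qed
  define L0 where "L0 = max 2 (nat \<lceil>(2 * Wc M k + abs CS) / \<epsilon>\<rceil>)"
  show ?thesis
  proof (intro exI[of _ C] conjI C(1) exI[of _ L0] allI impI)
    fix l :: nat and R assume lL: "L0 \<le> l" and RQ: "is_R_QM M k l R"
    have l: "l \<ge> 2" using lL unfolding L0_def by simp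
    have "real l \<ge> (2 * Wc M k + abs CS) / \<epsilon>"
    proof -
      have "nat \<lceil>(2 * Wc M k + abs CS) / \<epsilon>\<rceil> \<le> l" using lL unfolding L0_def by simp
      hence "real (nat \<lceil>(2 * Wc M k + abs CS) / \<epsilon>\<rceil>) \<le> real l" by simp
      moreover have "(2 * Wc M k + abs CS) / \<epsilon> \<le> real (nat \<lceil>(2 * Wc M k + abs CS) / \<epsilon>\<rceil>)" by linarith
      ultimately show ?thesis by linarith
    qed
    hence h1: "\<epsilon> * real l \<ge> 2 * Wc M k + abs CS" using e by (simp add: field_simps)
    have "real l \<le> real (l*(l+1))" by simp
    hence "\<epsilon> * real l \<le> \<epsilon> * real (l*(l+1))" using e by (intro mult_left_mono) auto
    hence big: "\<epsilon> * real (l*(l+1)) \<ge> 2 * Wc M k + CS" using h1 by linarith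
    have qb: "QM_num M k l R / QM_den M k l R \<le> (k^2 + 2*\<epsilon>) * real (l*(l+1)) + CS" using CS l RQ by blast
    have mb: "integral {rstar M k (3 * M) .. r0} (\<lambda>x. (deriv R x)^2 + real (l * (l + 1)) * (R x)^2)
      \<le> Kc * exp (- c * real l) *
       integral {rstar M k (3 * M) .. pi / 2} (\<lambda>x. (deriv R x)^2 + real (l * (l + 1)) * (R x)^2)"
      unfolding Kc_def c_def
      by (rule main_bound[OF M k l RQ less_imp_le[OF assms(3)] r0x1 x1b e wl qb big])
    have E0: "0 \<le> integral {rstar M k (3 * M) .. pi / 2} (\<lambda>x. (deriv R x)^2 + real (l * (l + 1)) * (R x)^2)"
      by (rule integral_nonneg_any) simp
    have ex: "exp (- c * real l) \<le> exp (- real l / C)"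
    proof -
      have "real l / C \<le> c * real l" using Cc C(1) by (simp add: divide_inverse mult.commute mult_right_mono)
      thus ?thesis by simp
    qed
    have "Kc * exp (- c * real l) \<le> C * exp (- real l / C)"
      using C(2) ex Kc by (intro mult_mono) auto
    from mult_right_mono[OF this E0] mb
    show "integral {rstar M k (3 * M) .. r0} (\<lambda>x. (deriv R x)^2 + real (l * (l + 1)) * (R x)^2)
           \<le> C * exp (- real l / C) * integral {rstar M k (3 * M) .. pi / 2} (\<lambda>x. (deriv R x)^2 + real (l * (l + 1)) * (R x)^2)"
      by linarith
  qed
qed

end
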